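(* Let $U\subset\mathbb{R}^n$, $V\subset\mathbb{R}^m$ be open, let $X\subset U$ and $Y\subset V$ be closed in $U$, $V$ respectively, and let $\varphi:V\to U$ be a $\mathcal{C}^p$ mapping with $\varphi(Y)\subset X$. Let $k\ge1$ and, for $i=0,1,\dots,k$, let $(b_{ij})_{j\ge1}$ be a sequence in $Y$ and $(\eta_{ij})_{j\ge1}$ a sequence in $\mathcal{P}_p(\mathbb{R}^m)^*$ such that: (1) the sequences $(b_{ij})_j$, $i=0,\dots,k$, converge to a common point $b\in Y$, and $\sum_{i=0}^k\eta_{ij}$ converges to $\eta\in\mathcal{P}_p(\mathbb{R}^m)^*$; (2) $|b_{ij}-b_{0j}|^{p-|\beta|}|\eta_{ij,\beta}(b_{ij})|\le c$ for all $i,j$ and all $\beta\in\mathbb{N}^m$ with $|\beta|\le p$, where $c$ is a constant. Set $a_{ij}=\varphi(b_{ij})$, $\xi_{ij}=\varphi_{*b_{ij}}(\eta_{ij})$, $a=\varphi(b)$, $\xi=\varphi_{*b}(\eta)$. Then: (1$'$) each $(a_{ij})_j$ converges to $a\in X$, and $\sum_{i=0}^k\xi_{ij}$ converges to $\xi$; (2$'$) there is a constant $c'$ such that $|a_{ij}-a_{0j}|^{p-|\alpha|}|\xi_{ij,\alpha}(a_{ij})|\le c'$ for all $i,j$ and all $\alpha\in\mathbb{N}^n$ with $|\alpha|\le p$.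
   Context: $\mathcal{P}_p(\mathbb{R}^d)$ denotes the space of real polynomials on $\mathbb{R}^d$ of degree $\le p$, with dual $\mathcal{P}_p(\mathbb{R}^d)^*$. For $\zeta\in\mathcal{P}_p(\mathbb{R}^d)^*$, $c\in\mathbb{R}^d$, $\gamma\in\mathbb{N}^d$ with $|\gamma|\le p$: $\zeta_\gamma(c):=\zeta(\tfrac1{\gamma!}(x-c)^\gamma)$. For $b\in V$, $\varphi^*_b:\mathcal{P}_p(\mathbb{R}^n)\to\mathcal{P}_p(\mathbb{R}^m)$ is $\varphi^*_b(P)=T^p_b(P\circ\varphi)$ (Taylor polynomial of order $p$ at $b$), and $\varphi_{*b}:\mathcal{P}_p(\mathbb{R}^m)^*\to\mathcal{P}_p(\mathbb{R}^n)^*$ is its dual, $\varphi_{*b}(\eta)(P)=\eta(\varphi^*_b(P))$. *)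

theory Defs
  imports "HOL-Analysis.Analysis"
begin

definition mdeg :: "('n::finite \<Rightarrow> nat) \<Rightarrow> nat" where
  "mdeg \<gamma> = (\<Sum>i\<in>UNIV. \<gamma> i)"

definition mfact :: "('n::finite \<Rightarrow> nat) \<Rightarrow> nat" where
  "mfact \<gamma> = (\<Prod>i\<in>UNIV. fact (\<gamma> i))"

definition mpow :: "real^'n::finite \<Rightarrow> ('n \<Rightarrow> nat) \<Rightarrow> real" where
  "mpow x \<gamma> = (\<Prod>i\<in>UNIV. (x $ i) ^ (\<gamma> i))"

definition polys :: "nat \<Rightarrow> (real^'n::finite \<Rightarrow> real) set" where
  "polys p = {P. \<exists>a::('n \<Rightarrow> nat) \<Rightarrow> real.
      P = (\<lambda>x. \<Sum>\<gamma>\<in>{\<gamma>. mdeg \<gamma> \<le> p}. a \<gamma> * mpow x \<gamma>)}"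

text \<open>Elements of the dual: functionals that are linear on the polynomials
  (only their values on polys p matter).\<close>
definition pdual :: "nat \<Rightarrow> ((real^'n::finite \<Rightarrow> real) \<Rightarrow> real) set" where
  "pdual p = {\<zeta>. (\<forall>P\<in>polys p. \<forall>Q\<in>polys p. \<zeta> (\<lambda>x. P x + Q x) = \<zeta> P + \<zeta> Q) \<and>
                 (\<forall>P\<in>polys p. \<forall>r. \<zeta> (\<lambda>x. r * P x) = r * \<zeta> P)}"

definition dual_tendsto :: "nat \<Rightarrow> (nat \<Rightarrow> (real^'n::finite \<Rightarrow> real) \<Rightarrow> real)
     \<Rightarrow> ((real^'n \<Rightarrow> real) \<Rightarrow> real) \<Rightarrow> bool" where
  "dual_tendsto p Z \<zeta> \<longleftrightarrow> (\<forall>P\<in>polys p. (\<lambda>j. Z j P) \<longlonglongrightarrow> \<zeta> P)"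

text \<open>zeta_gamma(c) = zeta((x-c)^gamma / gamma!)\<close>
definition zcomp :: "((real^'n::finite \<Rightarrow> real) \<Rightarrow> real) \<Rightarrow> real^'n \<Rightarrow> ('n \<Rightarrow> nat) \<Rightarrow> real" where
  "zcomp \<zeta> c \<gamma> = \<zeta> (\<lambda>x. mpow (x - c) \<gamma> / real (mfact \<gamma>))"

definition partial :: "'n::finite \<Rightarrow> (real^'n \<Rightarrow> real) \<Rightarrow> real^'n \<Rightarrow> real" where
  "partial i f x = deriv (\<lambda>t. f (x + t *\<^sub>R axis i 1)) 0"

fun pdl :: "'n::finite list \<Rightarrow> (real^'n \<Rightarrow> real) \<Rightarrow> real^'n \<Rightarrow> real" where
  "pdl [] f = f"
| "pdl (i # is) f = partial i (pdl is f)"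

definition idx_list :: "'n::finite list" where
  "idx_list = (SOME xs. distinct xs \<and> set xs = UNIV)"

text \<open>partial^beta f (for C^p functions the order of differentiation is irrelevant)\<close>
definition mderiv :: "('n::finite \<Rightarrow> nat) \<Rightarrow> (real^'n \<Rightarrow> real) \<Rightarrow> real^'n \<Rightarrow> real" where
  "mderiv \<beta> f = pdl (concat (map (\<lambda>i. replicate (\<beta> i) i) idx_list)) f"

definition Cp_on :: "nat \<Rightarrow> (real^'n::finite) set \<Rightarrow> (real^'n \<Rightarrow> real) \<Rightarrow> bool" where
  "Cp_on p V f \<longleftrightarrow>
     (\<forall>l. length l < p \<longrightarrow> (\<forall>i. \<forall>x\<in>V. (\<lambda>t. pdl l f (x + t *\<^sub>R axis i 1)) differentiable (at 0))) \<and>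
     (\<forall>l. length l \<le> p \<longrightarrow> continuous_on V (pdl l f))"

definition Cp_map_on :: "nat \<Rightarrow> (real^'m::finite) set \<Rightarrow> (real^'m \<Rightarrow> real^'n::finite) \<Rightarrow> bool" where
  "Cp_map_on p V \<phi> \<longleftrightarrow> (\<forall>k. Cp_on p V (\<lambda>x. \<phi> x $ k))"

definition taylor :: "nat \<Rightarrow> real^'n::finite \<Rightarrow> (real^'n \<Rightarrow> real) \<Rightarrow> real^'n \<Rightarrow> real" where
  "taylor p b f = (\<lambda>y. \<Sum>\<beta>\<in>{\<beta>. mdeg \<beta> \<le> p}. mderiv \<beta> f b / real (mfact \<beta>) * mpow (y - b) \<beta>)"

definition pullback :: "nat \<Rightarrow> (real^'m::finite \<Rightarrow> real^'n::finite) \<Rightarrow> real^'m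
     \<Rightarrow> (real^'n \<Rightarrow> real) \<Rightarrow> real^'m \<Rightarrow> real" where
  "pullback p \<phi> b P = taylor p b (P \<circ> \<phi>)"

definition pushfwd :: "nat \<Rightarrow> (real^'m::finite \<Rightarrow> real^'n::finite) \<Rightarrow> real^'m
     \<Rightarrow> ((real^'m \<Rightarrow> real) \<Rightarrow> real) \<Rightarrow> (real^'n \<Rightarrow> real) \<Rightarrow> real" where
  "pushfwd p \<phi> b \<eta> = (\<lambda>P. \<eta> (pullback p \<phi> b P))"

end

theory Submission
  imports Defs "HOL-Library.Function_Algebras"
begin
lemma finite_MI: "finite {\<gamma>::'n::finite\<Rightarrow>nat. mdeg \<gamma> \<le> p}"
proof -
  have "{\<gamma>::'n\<Rightarrow>nat. mdeg \<gamma> \<le> p} \<subseteq> PiE UNIV (\<lambda>_. {..p})"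
  proof
    fix \<gamma> :: "'n \<Rightarrow> nat" assume "\<gamma> \<in> {\<gamma>. mdeg \<gamma> \<le> p}"
    hence "\<gamma> i \<le> p" for i
      using member_le_sum[of i UNIV \<gamma>] by (auto simp: mdeg_def)
    thus "\<gamma> \<in> PiE UNIV (\<lambda>_. {..p})" by (auto simp: PiE_UNIV_domain)
  qed
  moreover have "finite (PiE (UNIV::'n set) (\<lambda>_. {..p}))" by (intro finite_PiE) auto
  ultimately show ?thesis by (rule finite_subset)
qed

lemma finite_le_fun: "finite {\<beta>::'n::finite\<Rightarrow>nat. \<beta> \<le> \<gamma>}"
proof -
  have "{\<beta>::'n\<Rightarrow>nat. \<beta> \<le> \<gamma>} = PiE UNIV (\<lambda>k. {..\<gamma> k})"
    by (auto simp: PiE_UNIV_domain le_fun_def)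
  thus ?thesis by (auto intro: finite_PiE)
qed

lemma mdeg_add: "mdeg (\<beta> + \<delta>) = mdeg \<beta> + mdeg \<delta>"
  by (simp add: mdeg_def sum.distrib)

lemma mdeg_zero[simp]: "mdeg 0 = 0"
  by (simp add: mdeg_def)

lemma mdeg_eq_0_iff: "mdeg (\<gamma>::'n::finite\<Rightarrow>nat) = 0 \<longleftrightarrow> \<gamma> = 0"
  by (auto simp: mdeg_def fun_eq_iff)

lemma mdeg_mono: "\<beta> \<le> \<gamma> \<Longrightarrow> mdeg \<beta> \<le> mdeg \<gamma>"
  by (auto simp: mdeg_def le_fun_def intro: sum_mono)

lemma mdeg_diff: "\<beta> \<le> \<gamma> \<Longrightarrow> mdeg (\<gamma> - \<beta>) = mdeg \<gamma> - mdeg \<beta>"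
proof -
  assume a: "\<beta> \<le> \<gamma>"
  hence "\<gamma> = \<beta> + (\<gamma> - \<beta>)" by (auto simp: fun_eq_iff le_fun_def)
  hence "mdeg \<gamma> = mdeg \<beta> + mdeg (\<gamma> - \<beta>)" by (metis mdeg_add)
  thus ?thesis by simp
qed

lemma mpow_add_exp: "mpow x (\<beta> + \<delta>) = mpow x \<beta> * mpow x \<delta>"
  by (simp add: mpow_def power_add prod.distrib)

lemma mpow_0_exp[simp]: "mpow x 0 = 1"
  by (simp add: mpow_def)

lemma mfact_0[simp]: "mfact 0 = 1"
  by (simp add: mfact_def)

lemma mfact_pos: "mfact \<gamma> > 0"
  by (simp add: mfact_def prod_pos)

lemma mfact_nz[simp]: "real (mfact \<gamma>) \<noteq> 0"
  using mfact_pos[of \<gamma>] by simp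

lemma mpow_0_vec: "mpow (0::real^'n::finite) \<gamma> = (if \<gamma> = 0 then 1 else 0)"
proof (cases "\<gamma> = 0")
  case False
  then obtain i where "\<gamma> i \<noteq> 0" by (auto simp: fun_eq_iff)
  hence "(0::real) ^ \<gamma> i = 0" by simp
  hence "(\<Prod>i\<in>UNIV. (0::real) ^ \<gamma> i) = 0" by (intro prod_zero) auto
  thus ?thesis using False by (simp add: mpow_def)
qed simp

lemma binom_fact_1d:
  fixes a b :: real
  shows "(a + b) ^ n / fact n = (\<Sum>i\<in>{..n}. a ^ i / fact i * (b ^ (n - i) / fact (n - i)))"
proof -
  have "(a + b) ^ n = (\<Sum>i\<le>n. of_nat (n choose i) * a ^ i * b ^ (n - i))"
    by (simp add: binomial_ring)
  hence "(a + b) ^ n / fact n = (\<Sum>i\<le>n. of_nat (n choose i) * a ^ i * b ^ (n - i) / fact n)"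
    by (simp add: sum_divide_distrib)
  also have "\<dots> = (\<Sum>i\<in>{..n}. a ^ i / fact i * (b ^ (n - i) / fact (n - i)))"
  proof (rule sum.cong)
    fix i assume "i \<in> {..n}"
    hence "real (n choose i) = fact n / (fact i * fact (n - i))"
      by (simp add: binomial_fact)
    thus "of_nat (n choose i) * a ^ i * b ^ (n - i) / fact n = a ^ i / fact i * (b ^ (n - i) / fact (n - i))"
      by (simp add: field_simps)
  qed simp
  finally show ?thesis .
qed

lemma mbinom:
  fixes u v :: "real^'n::finite"
  shows "mpow (u + v) \<gamma> / real (mfact \<gamma>) =
     (\<Sum>\<beta>\<in>{\<beta>. \<beta> \<le> \<gamma>}. mpow u \<beta> / real (mfact \<beta>) * (mpow v (\<gamma> - \<beta>) / real (mfact (\<gamma> - \<beta>))))"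
proof -
  have "mpow (u + v) \<gamma> / real (mfact \<gamma>) = (\<Prod>k\<in>UNIV. (u$k + v$k) ^ \<gamma> k / fact (\<gamma> k))"
    by (simp add: mpow_def mfact_def prod_dividef)
  also have "\<dots> = (\<Prod>k\<in>UNIV. \<Sum>i\<in>{..\<gamma> k}. u$k ^ i / fact i * (v$k ^ (\<gamma> k - i) / fact (\<gamma> k - i)))"
    by (simp add: binom_fact_1d)
  also have "\<dots> = (\<Sum>\<beta>\<in>PiE UNIV (\<lambda>k. {..\<gamma> k}). \<Prod>k\<in>UNIV. u$k ^ \<beta> k / fact (\<beta> k) * (v$k ^ (\<gamma> k - \<beta> k) / fact (\<gamma> k - \<beta> k)))"
    by (rule prod_sum_PiE) auto
  also have "PiE UNIV (\<lambda>k. {..\<gamma> k}) = {\<beta>. \<beta> \<le> \<gamma>}"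
    by (auto simp: PiE_UNIV_domain le_fun_def)
  also have "(\<Sum>\<beta>\<in>{\<beta>. \<beta> \<le> \<gamma>}. \<Prod>k\<in>UNIV. u$k ^ \<beta> k / fact (\<beta> k) * (v$k ^ (\<gamma> k - \<beta> k) / fact (\<gamma> k - \<beta> k)))
     = (\<Sum>\<beta>\<in>{\<beta>. \<beta> \<le> \<gamma>}. mpow u \<beta> / real (mfact \<beta>) * (mpow v (\<gamma> - \<beta>) / real (mfact (\<gamma> - \<beta>))))"
    by (simp add: mpow_def mfact_def prod_dividef prod.distrib)
  finally show ?thesis .
qed

section \<open>Polynomials\<close>

lemma polys_sum_form:
  assumes "S \<subseteq> {\<gamma>::'n::finite\<Rightarrow>nat. mdeg \<gamma> \<le> p}"
  shows "(\<lambda>x::real^'n. \<Sum>\<beta>\<in>S. a \<beta> * mpow x \<beta>) \<in> polys p"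
proof -
  let ?a = "\<lambda>\<beta>. if \<beta> \<in> S then a \<beta> else 0"
  have "(\<lambda>x::real^'n. \<Sum>\<beta>\<in>S. a \<beta> * mpow x \<beta>) = (\<lambda>x. \<Sum>\<gamma>\<in>{\<gamma>. mdeg \<gamma> \<le> p}. ?a \<gamma> * mpow x \<gamma>)"
    using assms finite_MI by (intro ext sum.mono_neutral_cong_left) auto
  thus ?thesis unfolding polys_def by (intro CollectI exI[of _ ?a])
qed

lemma polys_add: "P \<in> polys p \<Longrightarrow> Q \<in> polys p \<Longrightarrow> (\<lambda>x. P x + Q x) \<in> polys p"
proof -
  assume "P \<in> polys p" "Q \<in> polys p"
  then obtain a b where P: "P = (\<lambda>x. \<Sum>\<gamma>\<in>{\<gamma>. mdeg \<gamma> \<le> p}. a \<gamma> * mpow x \<gamma>)"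
     and Q: "Q = (\<lambda>x. \<Sum>\<gamma>\<in>{\<gamma>. mdeg \<gamma> \<le> p}. b \<gamma> * mpow x \<gamma>)" unfolding polys_def by blast
  have "(\<lambda>x. P x + Q x) = (\<lambda>x. \<Sum>\<gamma>\<in>{\<gamma>. mdeg \<gamma> \<le> p}. (a \<gamma> + b \<gamma>) * mpow x \<gamma>)"
    by (simp add: P Q sum.distrib ring_distribs)
  thus ?thesis unfolding polys_def by (intro CollectI exI[of _ "\<lambda>\<gamma>. a \<gamma> + b \<gamma>"])
qed

lemma polys_scale: "P \<in> polys p \<Longrightarrow> (\<lambda>x. r * P x) \<in> polys p"
proof -
  assume "P \<in> polys p"
  then obtain a where P: "P = (\<lambda>x. \<Sum>\<gamma>\<in>{\<gamma>. mdeg \<gamma> \<le> p}. a \<gamma> * mpow x \<gamma>)"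
     unfolding polys_def by blast
  have "(\<lambda>x. r * P x) = (\<lambda>x. \<Sum>\<gamma>\<in>{\<gamma>. mdeg \<gamma> \<le> p}. (r * a \<gamma>) * mpow x \<gamma>)"
    by (simp add: P sum_distrib_left mult.assoc)
  thus ?thesis unfolding polys_def by (intro CollectI exI[of _ "\<lambda>\<gamma>. r * a \<gamma>"]) simp
qed

lemma polys_zero: "(\<lambda>x. 0) \<in> polys p"
  using polys_sum_form[of "{}" p] by simp

lemma polys_sum: "finite S \<Longrightarrow> (\<And>s. s \<in> S \<Longrightarrow> F s \<in> polys p) \<Longrightarrow> (\<lambda>x. \<Sum>s\<in>S. F s x) \<in> polys p"
  by (induction S rule: finite_induct) (auto simp: polys_zero intro!: polys_add)

lemma mpow_shift_polys:
  fixes c :: "real^'n::finite"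
  assumes "mdeg \<gamma> \<le> p"
  shows "(\<lambda>x. mpow (x - c) \<gamma> / real (mfact \<gamma>)) \<in> polys p"
proof -
  have "(\<lambda>x. mpow (x - c) \<gamma> / real (mfact \<gamma>)) =
     (\<lambda>x. \<Sum>\<beta>\<in>{\<beta>. \<beta> \<le> \<gamma>}. (mpow (- c) (\<gamma> - \<beta>) / real (mfact (\<gamma> - \<beta>)) / real (mfact \<beta>)) * mpow x \<beta>)"
  proof
    fix x :: "real^'n"
    have "mpow (x - c) \<gamma> / real (mfact \<gamma>) = mpow (x + - c) \<gamma> / real (mfact \<gamma>)" by simp
    also have "\<dots> = (\<Sum>\<beta>\<in>{\<beta>. \<beta> \<le> \<gamma>}. (mpow (- c) (\<gamma> - \<beta>) / real (mfact (\<gamma> - \<beta>)) / real (mfact \<beta>)) * mpow x \<beta>)"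
      unfolding mbinom by (intro sum.cong) (auto simp: mult_ac)
    finally show "mpow (x - c) \<gamma> / real (mfact \<gamma>) = \<dots>" .
  qed
  also have "\<dots> \<in> polys p"
    using assms by (intro polys_sum_form) (auto dest: mdeg_mono)
  finally show ?thesis .
qed

lemma taylor_polys: "taylor p b f \<in> polys p"
proof -
  have "taylor p b f = (\<lambda>y. \<Sum>\<beta>\<in>{\<beta>. mdeg \<beta> \<le> p}. mderiv \<beta> f b * (mpow (y - b) \<beta> / real (mfact \<beta>)))"
    unfolding taylor_def by (intro ext sum.cong) auto
  also have "\<dots> \<in> polys p"
    by (intro polys_sum finite_MI polys_scale mpow_shift_polys) auto
  finally show ?thesis .
qed

lemma pdual_zero: "\<zeta> \<in> pdual p \<Longrightarrow> \<zeta> (\<lambda>x. 0) = 0"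
proof -
  assume "\<zeta> \<in> pdual p"
  hence "\<forall>P\<in>polys p. \<forall>r. \<zeta> (\<lambda>x. r * P x) = r * \<zeta> P" by (simp add: pdual_def)
  from this[rule_format, OF polys_zero, of 0] show ?thesis by simp
qed

lemma pdual_scale: "\<zeta> \<in> pdual p \<Longrightarrow> P \<in> polys p \<Longrightarrow> \<zeta> (\<lambda>x. r * P x) = r * \<zeta> P"
  by (simp add: pdual_def)

lemma pdual_add: "\<zeta> \<in> pdual p \<Longrightarrow> P \<in> polys p \<Longrightarrow> Q \<in> polys p \<Longrightarrow> \<zeta> (\<lambda>x. P x + Q x) = \<zeta> P + \<zeta> Q"
  by (simp add: pdual_def)

lemma pdual_sum:
  assumes "\<zeta> \<in> pdual p" "finite S" "\<And>s. s \<in> S \<Longrightarrow> F s \<in> polys p"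
  shows "\<zeta> (\<lambda>x. \<Sum>s\<in>S. F s x) = (\<Sum>s\<in>S. \<zeta> (F s))"
  using assms(2,3)
proof (induction S rule: finite_induct)
  case empty thus ?case using pdual_zero[OF assms(1)] by simp
next
  case (insert s S)
  have "\<zeta> (\<lambda>x. \<Sum>s\<in>insert s S. F s x) = \<zeta> (\<lambda>x. F s x + (\<Sum>s\<in>S. F s x))"
    using insert by simp
  also have "\<dots> = \<zeta> (F s) + \<zeta> (\<lambda>x. \<Sum>s\<in>S. F s x)"
    by (rule pdual_add[OF assms(1)]) (use insert.prems insert.hyps polys_sum[of S F p] in auto)
  finally show ?case using insert by simp
qed

lemma pdual_taylor:
  assumes "\<zeta> \<in> pdual p"
  shows "\<zeta> (taylor p b f) = (\<Sum>\<beta>\<in>{\<beta>. mdeg \<beta> \<le> p}. mderiv \<beta> f b * zcomp \<zeta> b \<beta>)"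
proof -
  have "taylor p b f = (\<lambda>y. \<Sum>\<beta>\<in>{\<beta>. mdeg \<beta> \<le> p}. mderiv \<beta> f b * (mpow (y - b) \<beta> / real (mfact \<beta>)))"
    unfolding taylor_def by (intro ext sum.cong) auto
  hence "\<zeta> (taylor p b f) = (\<Sum>\<beta>\<in>{\<beta>. mdeg \<beta> \<le> p}. \<zeta> (\<lambda>y. mderiv \<beta> f b * (mpow (y - b) \<beta> / real (mfact \<beta>))))"
    by (simp only:) (rule pdual_sum[OF assms finite_MI], rule polys_scale, rule mpow_shift_polys, simp)
  also have "\<dots> = (\<Sum>\<beta>\<in>{\<beta>. mdeg \<beta> \<le> p}. mderiv \<beta> f b * zcomp \<zeta> b \<beta>)"
    by (rule sum.cong[OF refl], unfold zcomp_def, rule pdual_scale[OF assms mpow_shift_polys], simp)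
  finally show ?thesis .
qed

lemma zcomp_reexpand:
  assumes "\<zeta> \<in> pdual p" "mdeg \<gamma> \<le> p"
  shows "zcomp \<zeta> x \<gamma> = (\<Sum>\<beta>\<in>{\<beta>. \<beta> \<le> \<gamma>}. (mpow (y - x) (\<gamma> - \<beta>) / real (mfact (\<gamma> - \<beta>))) * zcomp \<zeta> y \<beta>)"
proof -
  have "(\<lambda>z. mpow (z - x) \<gamma> / real (mfact \<gamma>)) =
     (\<lambda>z. \<Sum>\<beta>\<in>{\<beta>. \<beta> \<le> \<gamma>}. (mpow (y - x) (\<gamma> - \<beta>) / real (mfact (\<gamma> - \<beta>))) * (mpow (z - y) \<beta> / real (mfact \<beta>)))"
  proof
    fix z
    have "z - x = (z - y) + (y - x)" by simp
    hence "mpow (z - x) \<gamma> / real (mfact \<gamma>) = mpow ((z - y) + (y - x)) \<gamma> / real (mfact \<gamma>)" by simp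
    also have "\<dots> = (\<Sum>\<beta>\<in>{\<beta>. \<beta> \<le> \<gamma>}. (mpow (y - x) (\<gamma> - \<beta>) / real (mfact (\<gamma> - \<beta>))) * (mpow (z - y) \<beta> / real (mfact \<beta>)))"
      unfolding mbinom by (intro sum.cong) (auto simp: mult_ac)
    finally show "mpow (z - x) \<gamma> / real (mfact \<gamma>) = \<dots>" .
  qed
  hence "zcomp \<zeta> x \<gamma> = (\<Sum>\<beta>\<in>{\<beta>. \<beta> \<le> \<gamma>}. \<zeta> (\<lambda>z. (mpow (y - x) (\<gamma> - \<beta>) / real (mfact (\<gamma> - \<beta>))) * (mpow (z - y) \<beta> / real (mfact \<beta>))))"
    unfolding zcomp_def using assms
    by (simp only:) (rule pdual_sum[OF assms(1) finite_le_fun], rule polys_scale, rule mpow_shift_polys, use assms(2) in \<open>auto dest: mdeg_mono\<close>)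
  also have "\<dots> = (\<Sum>\<beta>\<in>{\<beta>. \<beta> \<le> \<gamma>}. (mpow (y - x) (\<gamma> - \<beta>) / real (mfact (\<gamma> - \<beta>))) * zcomp \<zeta> y \<beta>)"
    by (rule sum.cong[OF refl], unfold zcomp_def, rule pdual_scale[OF assms(1) mpow_shift_polys], use assms(2) in \<open>auto dest: mdeg_mono\<close>)
  finally show ?thesis .
qed

section \<open>Directional calculus\<close>

abbreviation ddir :: "(real^'n::finite \<Rightarrow> real) \<Rightarrow> real^'n \<Rightarrow> 'n \<Rightarrow> bool" where
  "ddir f x i \<equiv> (\<lambda>t. f (x + t *\<^sub>R axis i 1)) differentiable (at 0)"

lemma partial_deriv:
  "ddir f x i \<Longrightarrow> ((\<lambda>t. f (x + t *\<^sub>R axis i 1)) has_real_derivative partial i f x) (at 0)"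
  unfolding partial_def by (simp add: DERIV_deriv_iff_real_differentiable)

lemma partial_from_deriv:
  assumes "((\<lambda>t. f (x + t *\<^sub>R axis i 1)) has_real_derivative D) (at 0)"
  shows "ddir f x i" "partial i f x = D"
  using assms unfolding partial_def by (auto simp: real_differentiable_def intro: DERIV_imp_deriv)

lemma deriv_shift_axis:
  fixes x e :: "'a::real_vector"
  assumes "((\<lambda>t. f ((x + s *\<^sub>R e) + t *\<^sub>R e)) has_real_derivative D) (at 0)"
  shows "((\<lambda>t. f (x + t *\<^sub>R e)) has_real_derivative D) (at s)"
proof -
  have "(\<lambda>t. f ((x + s *\<^sub>R e) + t *\<^sub>R e)) = (\<lambda>t. (\<lambda>u. f (x + u *\<^sub>R e)) (t + s))"
    by (rule ext, rule arg_cong[where f=f]) (simp add: scaleR_add_left algebra_simps)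
  with assms have "((\<lambda>t. (\<lambda>u. f (x + u *\<^sub>R e)) (t + s)) has_real_derivative D) (at 0)" by simp
  hence "((\<lambda>u. f (x + u *\<^sub>R e)) has_real_derivative D) (at (0 + s))"
    by (subst DERIV_shift) simp
  thus ?thesis by simp
qed

lemma eventually_axis_in:
  fixes x :: "real^'n::finite"
  assumes "open V" "x \<in> V"
  shows "eventually (\<lambda>t. x + t *\<^sub>R axis i 1 \<in> V) (nhds (0::real))"
proof -
  obtain r where r: "r > 0" "ball x r \<subseteq> V" using assms openE by blast
  show ?thesis unfolding eventually_nhds_metric
  proof (intro exI[of _ r] conjI allI impI)
    fix t :: real assume "dist t 0 < r"
    hence "norm ((x + t *\<^sub>R axis i 1) - x) < r" by simp
    thus "x + t *\<^sub>R axis i 1 \<in> V" using r by (auto simp: dist_norm norm_minus_commute)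
  qed fact
qed

lemma partial_cong:
  fixes f g :: "real^'n::finite \<Rightarrow> real"
  assumes "open V" "\<forall>z\<in>V. f z = g z" "x \<in> V"
  shows "partial i f x = partial i g x" "ddir f x i = ddir g x i"
proof -
  have ev: "eventually (\<lambda>t. f (x + t *\<^sub>R axis i 1) = g (x + t *\<^sub>R axis i 1)) (nhds (0::real))"
    using eventually_axis_in[OF assms(1,3)] by eventually_elim (use assms(2) in auto)
  have *: "((\<lambda>t. f (x + t *\<^sub>R axis i 1)) has_real_derivative D) (at 0) \<longleftrightarrow>
           ((\<lambda>t. g (x + t *\<^sub>R axis i 1)) has_real_derivative D) (at 0)" for D
    by (rule DERIV_cong_ev[OF refl ev refl])
  show "partial i f x = partial i g x" unfolding partial_def deriv_def using * by simp
  show "ddir f x i = ddir g x i" unfolding real_differentiable_def using * by simp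
qed

lemma pdl_cong:
  fixes f g :: "real^'n::finite \<Rightarrow> real"
  assumes "open V" "\<forall>z\<in>V. f z = g z"
  shows "x \<in> V \<Longrightarrow> pdl l f x = pdl l g x"
proof (induction l arbitrary: x)
  case Nil thus ?case using assms by simp
next
  case (Cons i l)
  thus ?case using partial_cong(1)[OF assms(1), of "pdl l f" "pdl l g" x i] by simp
qed

lemma Cp_cong:
  fixes f g :: "real^'n::finite \<Rightarrow> real"
  assumes "open V" "\<forall>z\<in>V. f z = g z" "Cp_on p V f"
  shows "Cp_on p V g"
proof -
  have e: "\<forall>z\<in>V. pdl l f z = pdl l g z" for l using pdl_cong[OF assms(1,2)] by blast
  have c: "continuous_on V (pdl l g)" if "length l \<le> p" for l
  proof -
    have "continuous_on V (pdl l f)" using conjunct2[OF assms(3)[unfolded Cp_on_def], rule_format, OF that] .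
    moreover have "continuous_on V (pdl l f) = continuous_on V (pdl l g)"
      by (rule continuous_on_cong[OF refl]) (use e in blast)
    ultimately show ?thesis by simp
  qed
  have d: "ddir (pdl l g) x i" if "length l < p" "x \<in> V" for l x i
  proof -
    have "ddir (pdl l f) x i" using conjunct1[OF assms(3)[unfolded Cp_on_def], rule_format, OF that(1) that(2)] .
    thus ?thesis using partial_cong(2)[OF assms(1) e[of l] that(2)] by simp
  qed
  show ?thesis unfolding Cp_on_def using c d by blast
qed

lemma pdl_append: "pdl (a @ b) f = pdl a (pdl b f)"
  by (induction a) auto

lemma Cp_pdl:
  fixes f :: "real^'n::finite \<Rightarrow> real"
  assumes "Cp_on p V f" "length l \<le> p"
  shows "Cp_on (p - length l) V (pdl l f)"
  unfolding Cp_on_def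
proof (intro conjI allI impI ballI)
  fix l' :: "'n list" and i :: 'n and x assume l': "length l' < p - length l" and x: "x \<in> V"
  hence "length (l' @ l) < p" by simp
  from conjunct1[OF assms(1)[unfolded Cp_on_def], rule_format, OF this x, of i]
  show "ddir (pdl l' (pdl l f)) x i" by (simp add: pdl_append)
next
  fix l' :: "'n list" assume l': "length l' \<le> p - length l"
  hence "length (l' @ l) \<le> p" using assms(2) by simp
  from conjunct2[OF assms(1)[unfolded Cp_on_def], rule_format, OF this]
  show "continuous_on V (pdl l' (pdl l f))" by (simp add: pdl_append)
qed

lemma Cp_mono:
  fixes f :: "real^'n::finite \<Rightarrow> real"
  assumes "q \<le> p" "Cp_on p V f"
  shows "Cp_on q V f"
  unfolding Cp_on_def
proof (intro conjI allI impI ballI)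
  fix l :: "'n list" and i :: 'n and x assume "length l < q" "x \<in> V"
  thus "ddir (pdl l f) x i" using conjunct1[OF assms(2)[unfolded Cp_on_def], rule_format, of l x i] assms(1) by simp
next
  fix l :: "'n list" assume "length l \<le> q"
  thus "continuous_on V (pdl l f)" using conjunct2[OF assms(2)[unfolded Cp_on_def], rule_format, of l] assms(1) by simp
qed

lemma Cp_cont:
  fixes f :: "real^'n::finite \<Rightarrow> real"
  assumes "Cp_on p V f" shows "continuous_on V f"
  using conjunct2[OF assms[unfolded Cp_on_def], rule_format, of "[]"] by simp

lemma Cp_0: "Cp_on 0 V f \<longleftrightarrow> continuous_on V f"
proof
  assume "continuous_on V f"
  thus "Cp_on 0 V f" unfolding Cp_on_def by simp
qed (rule Cp_cont)

lemma Cp_Suc_D: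
  fixes f :: "real^'n::finite \<Rightarrow> real"
  assumes "Cp_on (Suc p) V f"
  shows "continuous_on V f" "\<And>i x. x \<in> V \<Longrightarrow> ddir f x i" "\<And>i. Cp_on p V (partial i f)"
proof -
  show "continuous_on V f" by (rule Cp_cont[OF assms])
  show "ddir f x i" if "x \<in> V" for i x
    using conjunct1[OF assms[unfolded Cp_on_def], rule_format, of "[]" x i] that by simp
  show "Cp_on p V (partial i f)" for i using Cp_pdl[OF assms, of "[i]"] by simp
qed

lemma Cp_Suc_I:
  fixes f :: "real^'n::finite \<Rightarrow> real"
  assumes "continuous_on V f" "\<And>i x. x \<in> V \<Longrightarrow> ddir f x i" "\<And>i. Cp_on p V (partial i f)"
  shows "Cp_on (Suc p) V f"
  unfolding Cp_on_def
proof (intro conjI allI impI ballI)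
  fix l :: "'n list" and i :: 'n and x assume l: "length l < Suc p" and x: "x \<in> V"
  show "ddir (pdl l f) x i"
  proof (cases l rule: rev_cases)
    case Nil thus ?thesis using assms(2)[OF x] by simp
  next
    case (snoc l' j)
    hence "pdl l f = pdl l' (partial j f)" by (simp add: pdl_append)
    moreover have "length l' < p" using l snoc by simp
    ultimately show ?thesis using conjunct1[OF assms(3)[of j, unfolded Cp_on_def], rule_format, of l' x i] x by simp
  qed
next
  fix l :: "'n list" assume l: "length l \<le> Suc p"
  show "continuous_on V (pdl l f)"
  proof (cases l rule: rev_cases)
    case Nil thus ?thesis using assms(1) by simp
  next
    case (snoc l' j)
    hence "pdl l f = pdl l' (partial j f)" by (simp add: pdl_append)
    moreover have "length l' \<le> p" using l snoc by simp
    ultimately show ?thesis using conjunct2[OF assms(3)[of j, unfolded Cp_on_def], rule_format, of l'] by simp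
  qed
qed

lemma partial_const: "partial i (\<lambda>z. c) = (\<lambda>x. 0)"
  unfolding partial_def by (intro ext DERIV_imp_deriv) simp

lemma partial_add:
  assumes "ddir f x i" "ddir g x i"
  shows "partial i (\<lambda>z. f z + g z) x = partial i f x + partial i g x" "ddir (\<lambda>z. f z + g z) x i"
  using partial_from_deriv[OF DERIV_add[OF partial_deriv[OF assms(1)] partial_deriv[OF assms(2)]]] by auto

lemma partial_mult:
  assumes "ddir f x i" "ddir g x i"
  shows "partial i (\<lambda>z. f z * g z) x = f x * partial i g x + partial i f x * g x" "ddir (\<lambda>z. f z * g z) x i"
  using partial_from_deriv[OF DERIV_mult[OF partial_deriv[OF assms(1)] partial_deriv[OF assms(2)]]]
  by (auto simp: algebra_simps)

lemma partial_scale: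
  assumes "ddir f x i"
  shows "partial i (\<lambda>z. r * f z) x = r * partial i f x" "ddir (\<lambda>z. r * f z) x i"
  using partial_from_deriv[OF DERIV_cmult[OF partial_deriv[OF assms(1)], of r]] by auto

lemma Cp_const: "Cp_on p V (\<lambda>z. c)"
proof (induction p arbitrary: c)
  case 0 thus ?case by (simp add: Cp_0)
next
  case (Suc p)
  show ?case by (rule Cp_Suc_I) (auto simp: partial_const Suc.IH)
qed

lemma Cp_add:
  assumes "open V"
  shows "Cp_on p V f \<Longrightarrow> Cp_on p V g \<Longrightarrow> Cp_on p V (\<lambda>z. f z + g z)"
proof (induction p arbitrary: f g)
  case 0 thus ?case by (simp add: Cp_0 continuous_on_add)
next
  case (Suc p)
  note f = Cp_Suc_D[OF Suc.prems(1)]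
  note g = Cp_Suc_D[OF Suc.prems(2)]
  show ?case
  proof (rule Cp_Suc_I)
    show "continuous_on V (\<lambda>z. f z + g z)" using f g by (intro continuous_on_add)
    show "ddir (\<lambda>z. f z + g z) x i" if "x \<in> V" for i x using partial_add(2)[OF f(2)[OF that] g(2)[OF that]] .
    show "Cp_on p V (partial i (\<lambda>z. f z + g z))" for i
    proof (rule Cp_cong[OF assms])
      show "Cp_on p V (\<lambda>z. partial i f z + partial i g z)" using Suc.IH f(3) g(3) by blast
      show "\<forall>z\<in>V. partial i f z + partial i g z = partial i (\<lambda>z. f z + g z) z"
        using partial_add(1)[OF f(2) g(2)] by simp
    qed
  qed
qed

lemma Cp_scale:
  assumes "open V"
  shows "Cp_on p V f \<Longrightarrow> Cp_on p V (\<lambda>z. r * f z)"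
proof (induction p arbitrary: f)
  case 0 thus ?case by (simp add: Cp_0 continuous_on_mult continuous_on_const)
next
  case (Suc p)
  note f = Cp_Suc_D[OF Suc.prems(1)]
  show ?case
  proof (rule Cp_Suc_I)
    show "continuous_on V (\<lambda>z. r * f z)" using f by (intro continuous_on_mult continuous_on_const)
    show "ddir (\<lambda>z. r * f z) x i" if "x \<in> V" for i x using partial_scale(2)[OF f(2)[OF that]] .
    show "Cp_on p V (partial i (\<lambda>z. r * f z))" for i
    proof (rule Cp_cong[OF assms])
      show "Cp_on p V (\<lambda>z. r * partial i f z)" using Suc.IH f(3) by blast
      show "\<forall>z\<in>V. r * partial i f z = partial i (\<lambda>z. r * f z) z"
        using partial_scale(1)[OF f(2)] by simp
    qed
  qed
qed

lemma Cp_mult: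
  assumes "open V"
  shows "Cp_on p V f \<Longrightarrow> Cp_on p V g \<Longrightarrow> Cp_on p V (\<lambda>z. f z * g z)"
proof (induction p arbitrary: f g)
  case 0 thus ?case by (simp add: Cp_0 continuous_on_mult)
next
  case (Suc p)
  note f = Cp_Suc_D[OF Suc.prems(1)]
  note g = Cp_Suc_D[OF Suc.prems(2)]
  have fp: "Cp_on p V f" "Cp_on p V g" using Suc.prems Cp_mono[of p "Suc p"] by auto
  show ?case
  proof (rule Cp_Suc_I)
    show "continuous_on V (\<lambda>z. f z * g z)" using f g by (intro continuous_on_mult)
    show "ddir (\<lambda>z. f z * g z) x i" if "x \<in> V" for i x using partial_mult(2)[OF f(2)[OF that] g(2)[OF that]] .
    show "Cp_on p V (partial i (\<lambda>z. f z * g z))" for i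
    proof (rule Cp_cong[OF assms])
      show "Cp_on p V (\<lambda>z. f z * partial i g z + partial i f z * g z)"
        by (rule Cp_add[OF assms]; rule Suc.IH) (auto simp: fp f(3) g(3))
      show "\<forall>z\<in>V. f z * partial i g z + partial i f z * g z = partial i (\<lambda>z. f z * g z) z"
        using partial_mult(1)[OF f(2) g(2)] by simp
    qed
  qed
qed

lemma Cp_diff:
  assumes "open V" "Cp_on p V f" "Cp_on p V g"
  shows "Cp_on p V (\<lambda>z. f z - g z)"
proof -
  have "Cp_on p V (\<lambda>z. f z + (-1) * g z)" by (intro Cp_add Cp_scale assms)
  thus ?thesis by simp
qed

lemma Cp_sum:
  assumes "open V" "finite S" "\<And>s. s \<in> S \<Longrightarrow> Cp_on p V (F s)"
  shows "Cp_on p V (\<lambda>z. \<Sum>s\<in>S. F s z)"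
  using assms(2,3)
proof (induction S rule: finite_induct)
  case empty thus ?case by (simp add: Cp_const)
next
  case (insert s S)
  have "Cp_on p V (\<lambda>z. F s z + (\<Sum>s\<in>S. F s z))"
    by (rule Cp_add[OF assms(1)]) (use insert in auto)
  thus ?case using insert by simp
qed

lemma Cp_prod:
  assumes "open V" "finite S" "\<And>s. s \<in> S \<Longrightarrow> Cp_on p V (F s)"
  shows "Cp_on p V (\<lambda>z. \<Prod>s\<in>S. F s z)"
  using assms(2,3)
proof (induction S rule: finite_induct)
  case empty thus ?case by (simp add: Cp_const)
next
  case (insert s S)
  have "Cp_on p V (\<lambda>z. F s z * (\<Prod>s\<in>S. F s z))"
    by (rule Cp_mult[OF assms(1)]) (use insert in auto)
  thus ?case using insert by simp
qed

lemma Cp_power: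
  assumes "open V" "Cp_on p V f"
  shows "Cp_on p V (\<lambda>z. f z ^ n)"
proof (induction n)
  case 0 thus ?case by (simp add: Cp_const)
next
  case (Suc n)
  have "Cp_on p V (\<lambda>z. f z * f z ^ n)" by (rule Cp_mult[OF assms(1) assms(2) Suc.IH])
  thus ?case by simp
qed

lemma pdl_const: "pdl l (\<lambda>z. c) = (\<lambda>z. if l = [] then c else 0)"
  by (induction l) (auto simp: partial_const)

lemma Cp_ddir:
  fixes f :: "real^'n::finite \<Rightarrow> real"
  assumes "Cp_on p V f" "length l < p" "x \<in> V"
  shows "ddir (pdl l f) x i"
  using conjunct1[OF assms(1)[unfolded Cp_on_def], rule_format, OF assms(2,3)] .

lemma pdl_add:
  assumes "open V" "Cp_on p V f" "Cp_on p V g"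
  shows "length l \<le> p \<Longrightarrow> x \<in> V \<Longrightarrow> pdl l (\<lambda>z. f z + g z) x = pdl l f x + pdl l g x"
proof (induction l arbitrary: x)
  case Nil thus ?case by simp
next
  case (Cons i l)
  have "pdl (i # l) (\<lambda>z. f z + g z) x = partial i (pdl l (\<lambda>z. f z + g z)) x" by simp
  also have "\<dots> = partial i (\<lambda>z. pdl l f z + pdl l g z) x"
    by (rule partial_cong(1)[OF assms(1) _ Cons.prems(2)]) (use Cons in auto)
  also have "\<dots> = partial i (pdl l f) x + partial i (pdl l g) x"
    using Cons.prems by (intro partial_add Cp_ddir[OF assms(2)] Cp_ddir[OF assms(3)]) auto
  finally show ?case by simp
qed

lemma pdl_scale:
  assumes "open V" "Cp_on p V f"
  shows "length l \<le> p \<Longrightarrow> x \<in> V \<Longrightarrow> pdl l (\<lambda>z. r * f z) x = r * pdl l f x"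
proof (induction l arbitrary: x)
  case Nil thus ?case by simp
next
  case (Cons i l)
  have "pdl (i # l) (\<lambda>z. r * f z) x = partial i (pdl l (\<lambda>z. r * f z)) x" by simp
  also have "\<dots> = partial i (\<lambda>z. r * pdl l f z) x"
    by (rule partial_cong(1)[OF assms(1) _ Cons.prems(2)]) (use Cons in auto)
  also have "\<dots> = r * partial i (pdl l f) x"
    using Cons.prems by (intro partial_scale Cp_ddir[OF assms(2)]) auto
  finally show ?case by simp
qed

lemma pdl_sum:
  assumes "open V" "finite S" "\<And>s. s \<in> S \<Longrightarrow> Cp_on p V (F s)" "length l \<le> p" "x \<in> V"
  shows "pdl l (\<lambda>z. \<Sum>s\<in>S. F s z) x = (\<Sum>s\<in>S. pdl l (F s) x)"
  using assms(2,3)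
proof (induction S rule: finite_induct)
  case empty thus ?case by (simp add: pdl_const)
next
  case (insert s S)
  have "pdl l (\<lambda>z. \<Sum>s\<in>insert s S. F s z) x = pdl l (\<lambda>z. F s z + (\<Sum>s\<in>S. F s z)) x"
    using insert by simp
  also have "\<dots> = pdl l (F s) x + pdl l (\<lambda>z. \<Sum>s\<in>S. F s z) x"
    by (rule pdl_add[OF assms(1) _ _ assms(4,5)]) (use insert in \<open>auto intro: Cp_sum[OF assms(1)]\<close>)
  finally show ?case using insert by simp
qed

section \<open>Mean value along an axis and Schwarz\<close>

lemma mvt_line:
  fixes G :: "real \<Rightarrow> real"
  assumes "\<And>s. (0 \<le> s \<and> s \<le> t \<or> t \<le> s \<and> s \<le> 0) \<Longrightarrow> (G has_real_derivative G' s) (at s)"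
  shows "\<exists>s. (0 \<le> s \<and> s \<le> t \<or> t \<le> s \<and> s \<le> 0) \<and> G t - G 0 = t * G' s"
proof (cases "t = 0")
  case True thus ?thesis by (intro exI[of _ 0]) simp
next
  case False
  show ?thesis
  proof (cases "t > 0")
    case True
    from MVT2[OF True, of G G'] assms True obtain z where "0 < z" "z < t" "G t - G 0 = (t - 0) * G' z"
      by force
    thus ?thesis by (intro exI[of _ z]) auto
  next
    case f: False
    hence "t < 0" using False by simp
    from MVT2[OF this, of G G'] assms \<open>t < 0\<close> obtain z where "t < z" "z < 0" "G 0 - G t = (0 - t) * G' z"
      by force
    thus ?thesis by (intro exI[of _ z]) (auto simp: algebra_simps)
  qed
qed

lemma mvt_axis:
  fixes f :: "real^'n::finite \<Rightarrow> real"
  assumes "\<And>s. (0 \<le> s \<and> s \<le> t \<or> t \<le> s \<and> s \<le> 0) \<Longrightarrow> ddir f (x + s *\<^sub>R axis i 1) i"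
  shows "\<exists>s. (0 \<le> s \<and> s \<le> t \<or> t \<le> s \<and> s \<le> 0) \<and>
           f (x + t *\<^sub>R axis i 1) - f x = t * partial i f (x + s *\<^sub>R axis i 1)"
proof -
  have "((\<lambda>u. f (x + u *\<^sub>R axis i 1)) has_real_derivative partial i f (x + s *\<^sub>R axis i 1)) (at s)"
    if "0 \<le> s \<and> s \<le> t \<or> t \<le> s \<and> s \<le> 0" for s
    by (rule deriv_shift_axis, rule partial_deriv, rule assms[OF that])
  from mvt_line[of t "\<lambda>u. f (x + u *\<^sub>R axis i 1)", OF this] show ?thesis by simp
qed

lemma double_diff:
  fixes f :: "real^'n::finite \<Rightarrow> real"
  assumes V: "open V" and f: "Cp_on 2 V f" and t: "t > 0"
    and box: "\<And>s r. 0 \<le> s \<Longrightarrow> s \<le> t \<Longrightarrow> 0 \<le> r \<Longrightarrow> r \<le> t \<Longrightarrow> x + s *\<^sub>R axis i 1 + r *\<^sub>R axis j 1 \<in> V"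
  shows "\<exists>s r. 0 \<le> s \<and> s \<le> t \<and> 0 \<le> r \<and> r \<le> t \<and>
     f (x + t *\<^sub>R axis i 1 + t *\<^sub>R axis j 1) - f (x + t *\<^sub>R axis i 1) - f (x + t *\<^sub>R axis j 1) + f x
       = t * t * partial j (partial i f) (x + s *\<^sub>R axis i 1 + r *\<^sub>R axis j 1)"
proof -
  let ?ei = "axis i (1::real)" and ?ej = "axis j (1::real)"
  have f1: "ddir f z k" if "z \<in> V" for z k using Cp_ddir[OF f, of "[]" z k] that by simp
  have f2: "ddir (partial k f) z k'" if "z \<in> V" for z k k' using Cp_ddir[OF f, of "[k]" z k'] that by simp
  define G where "G = (\<lambda>\<sigma>. f ((x + t *\<^sub>R ?ej) + \<sigma> *\<^sub>R ?ei) - f (x + \<sigma> *\<^sub>R ?ei))"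
  have inV1: "(x + t *\<^sub>R ?ej) + \<sigma> *\<^sub>R ?ei \<in> V" and inV2: "x + \<sigma> *\<^sub>R ?ei \<in> V"
    if "0 \<le> \<sigma> \<and> \<sigma> \<le> t \<or> t \<le> \<sigma> \<and> \<sigma> \<le> 0" for \<sigma>
  proof -
    have "0 \<le> \<sigma>" "\<sigma> \<le> t" using that t by auto
    from box[OF this, of t] box[OF this, of 0] t
    show "(x + t *\<^sub>R ?ej) + \<sigma> *\<^sub>R ?ei \<in> V" "x + \<sigma> *\<^sub>R ?ei \<in> V" by (simp_all add: algebra_simps)
  qed
  have "\<exists>\<sigma>. (0 \<le> \<sigma> \<and> \<sigma> \<le> t \<or> t \<le> \<sigma> \<and> \<sigma> \<le> 0) \<and> G t - G 0 = t *
          (partial i f ((x + t *\<^sub>R ?ej) + \<sigma> *\<^sub>R ?ei) - partial i f (x + \<sigma> *\<^sub>R ?ei))"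
  proof (rule mvt_line)
    fix \<sigma> assume h: "0 \<le> \<sigma> \<and> \<sigma> \<le> t \<or> t \<le> \<sigma> \<and> \<sigma> \<le> 0"
    have d1: "((\<lambda>u. f ((x + t *\<^sub>R ?ej) + u *\<^sub>R ?ei)) has_real_derivative partial i f ((x + t *\<^sub>R ?ej) + \<sigma> *\<^sub>R ?ei)) (at \<sigma>)"
      by (rule deriv_shift_axis, rule partial_deriv, rule f1[OF inV1[OF h]])
    have d2: "((\<lambda>u. f (x + u *\<^sub>R ?ei)) has_real_derivative partial i f (x + \<sigma> *\<^sub>R ?ei)) (at \<sigma>)"
      by (rule deriv_shift_axis, rule partial_deriv, rule f1[OF inV2[OF h]])
    show "(G has_real_derivative (partial i f ((x + t *\<^sub>R ?ej) + \<sigma> *\<^sub>R ?ei) - partial i f (x + \<sigma> *\<^sub>R ?ei))) (at \<sigma>)"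
      unfolding G_def by (rule DERIV_diff[OF d1 d2])
  qed
  then obtain \<sigma> where \<sigma>: "0 \<le> \<sigma>" "\<sigma> \<le> t" and eq1: "G t - G 0 = t *
          (partial i f ((x + t *\<^sub>R ?ej) + \<sigma> *\<^sub>R ?ei) - partial i f (x + \<sigma> *\<^sub>R ?ei))" using t by auto
  define H where "H = (\<lambda>\<rho>. partial i f ((x + \<sigma> *\<^sub>R ?ei) + \<rho> *\<^sub>R ?ej))"
  have "\<exists>\<rho>. (0 \<le> \<rho> \<and> \<rho> \<le> t \<or> t \<le> \<rho> \<and> \<rho> \<le> 0) \<and> H t - H 0 = t * partial j (partial i f) ((x + \<sigma> *\<^sub>R ?ei) + \<rho> *\<^sub>R ?ej)"
  proof (rule mvt_line)
    fix \<rho> assume h: "0 \<le> \<rho> \<and> \<rho> \<le> t \<or> t \<le> \<rho> \<and> \<rho> \<le> 0"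
    hence "0 \<le> \<rho>" "\<rho> \<le> t" using t by auto
    hence inV: "(x + \<sigma> *\<^sub>R ?ei) + \<rho> *\<^sub>R ?ej \<in> V" using box[OF \<sigma>] by simp
    show "(H has_real_derivative partial j (partial i f) ((x + \<sigma> *\<^sub>R ?ei) + \<rho> *\<^sub>R ?ej)) (at \<rho>)"
      unfolding H_def by (rule deriv_shift_axis, rule partial_deriv, rule f2[OF inV])
  qed
  then obtain \<rho> where \<rho>: "0 \<le> \<rho>" "\<rho> \<le> t" and eq2: "H t - H 0 = t * partial j (partial i f) ((x + \<sigma> *\<^sub>R ?ei) + \<rho> *\<^sub>R ?ej)"
    using t by auto
  have "f (x + t *\<^sub>R ?ei + t *\<^sub>R ?ej) - f (x + t *\<^sub>R ?ei) - f (x + t *\<^sub>R ?ej) + f x = G t - G 0"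
    unfolding G_def by (simp add: algebra_simps)
  also have "\<dots> = t * (H t - H 0)" unfolding eq1 H_def by (simp add: algebra_simps)
  also have "\<dots> = t * t * partial j (partial i f) (x + \<sigma> *\<^sub>R ?ei + \<rho> *\<^sub>R ?ej)" unfolding eq2 by simp
  finally show ?thesis using \<sigma> \<rho> by blast
qed

lemma norm_two_axes:
  fixes x :: "real^'n::finite"
  shows "norm (s *\<^sub>R axis i 1 + r *\<^sub>R axis j (1::real)) \<le> \<bar>s\<bar> + \<bar>r\<bar>"
  using norm_triangle_ineq[of "s *\<^sub>R axis i (1::real)" "r *\<^sub>R axis j 1"] by simp

lemma schwarz:
  fixes f :: "real^'n::finite \<Rightarrow> real"
  assumes V: "open V" and f: "Cp_on 2 V f" and x: "x \<in> V"
  shows "partial i (partial j f) x = partial j (partial i f) x"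
proof (rule ccontr)
  let ?A = "partial j (partial i f) x" and ?B = "partial i (partial j f) x"
  assume ne: "?B \<noteq> ?A"
  define \<epsilon> where "\<epsilon> = \<bar>?A - ?B\<bar> / 2"
  have \<epsilon>: "\<epsilon> > 0" using ne unfolding \<epsilon>_def by simp
  have "Cp_on 0 V (pdl [j,i] f)" using Cp_pdl[OF f, of "[j,i]"] by simp
  hence c1: "continuous_on V (partial j (partial i f))" using Cp_cont by simp
  have "Cp_on 0 V (pdl [i,j] f)" using Cp_pdl[OF f, of "[i,j]"] by simp
  hence c2: "continuous_on V (partial i (partial j f))" using Cp_cont by simp
  obtain d1 where d1: "d1 > 0" "\<And>z. z \<in> V \<Longrightarrow> dist z x < d1 \<Longrightarrow> dist (partial j (partial i f) z) ?A < \<epsilon>"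
    using c1 x \<epsilon> unfolding continuous_on_iff by metis
  obtain d2 where d2: "d2 > 0" "\<And>z. z \<in> V \<Longrightarrow> dist z x < d2 \<Longrightarrow> dist (partial i (partial j f) z) ?B < \<epsilon>"
    using c2 x \<epsilon> unfolding continuous_on_iff by metis
  obtain r where r: "r > 0" "ball x r \<subseteq> V" using V x openE by blast
  define t where "t = min (min d1 d2) r / 3"
  have t: "t > 0" "2 * t < d1" "2 * t < d2" "2 * t < r" using d1 d2 r unfolding t_def by auto
  have near: "dist (x + s *\<^sub>R axis a 1 + q *\<^sub>R axis b 1) x \<le> 2 * t" if "0 \<le> s" "s \<le> t" "0 \<le> q" "q \<le> t" for s q a b
  proof -
    have "dist (x + s *\<^sub>R axis a 1 + q *\<^sub>R axis b 1) x = norm (s *\<^sub>R axis a 1 + q *\<^sub>R axis b (1::real))"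
      by (simp add: dist_norm algebra_simps)
    also have "\<dots> \<le> \<bar>s\<bar> + \<bar>q\<bar>" by (rule norm_two_axes)
    also have "\<dots> \<le> 2 * t" using that t by linarith
    finally show ?thesis .
  qed
  have inV: "x + s *\<^sub>R axis a 1 + q *\<^sub>R axis b 1 \<in> V" if "0 \<le> s" "s \<le> t" "0 \<le> q" "q \<le> t" for s q a b
    using near[OF that, of a b] t r by (auto simp: dist_commute)
  obtain s1 r1 where sr1: "0 \<le> s1" "s1 \<le> t" "0 \<le> r1" "r1 \<le> t" and e1:
     "f (x + t *\<^sub>R axis i 1 + t *\<^sub>R axis j 1) - f (x + t *\<^sub>R axis i 1) - f (x + t *\<^sub>R axis j 1) + f x
       = t * t * partial j (partial i f) (x + s1 *\<^sub>R axis i 1 + r1 *\<^sub>R axis j 1)"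
    using double_diff[OF V f t(1), of x i j] inV by blast
  obtain s2 r2 where sr2: "0 \<le> s2" "s2 \<le> t" "0 \<le> r2" "r2 \<le> t" and e2:
     "f (x + t *\<^sub>R axis j 1 + t *\<^sub>R axis i 1) - f (x + t *\<^sub>R axis j 1) - f (x + t *\<^sub>R axis i 1) + f x
       = t * t * partial i (partial j f) (x + s2 *\<^sub>R axis j 1 + r2 *\<^sub>R axis i 1)"
    using double_diff[OF V f t(1), of x j i] inV by blast
  have "x + t *\<^sub>R axis j 1 + t *\<^sub>R axis i 1 = x + t *\<^sub>R axis i 1 + t *\<^sub>R axis j (1::real)" by (simp add: algebra_simps)
  hence "t * t * partial j (partial i f) (x + s1 *\<^sub>R axis i 1 + r1 *\<^sub>R axis j 1)
       = t * t * partial i (partial j f) (x + s2 *\<^sub>R axis j 1 + r2 *\<^sub>R axis i 1)"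
    using e1 e2 by (simp add: algebra_simps)
  hence eq: "partial j (partial i f) (x + s1 *\<^sub>R axis i 1 + r1 *\<^sub>R axis j 1)
       = partial i (partial j f) (x + s2 *\<^sub>R axis j 1 + r2 *\<^sub>R axis i 1)" using t by simp
  have a1: "dist (partial j (partial i f) (x + s1 *\<^sub>R axis i 1 + r1 *\<^sub>R axis j 1)) ?A < \<epsilon>"
    using d1(2)[OF inV[OF sr1]] near[OF sr1, of i j] t by simp
  have a2: "dist (partial i (partial j f) (x + s2 *\<^sub>R axis j 1 + r2 *\<^sub>R axis i 1)) ?B < \<epsilon>"
    using d2(2)[OF inV[OF sr2]] near[OF sr2, of j i] t by simp
  have "\<bar>?A - ?B\<bar> < 2 * \<epsilon>" using a1 a2 eq unfolding dist_real_def by linarith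
  thus False unfolding \<epsilon>_def by simp
qed

lemma pdl_swap:
  fixes f :: "real^'n::finite \<Rightarrow> real"
  assumes V: "open V" and f: "Cp_on p V f" and len: "length (l1 @ i # j # l2) \<le> p" and x: "x \<in> V"
  shows "pdl (l1 @ i # j # l2) f x = pdl (l1 @ j # i # l2) f x"
proof -
  have "Cp_on (p - length l2) V (pdl l2 f)" using Cp_pdl[OF f, of l2] len by simp
  hence F: "Cp_on 2 V (pdl l2 f)" by (rule Cp_mono[rotated]) (use len in simp)
  have "\<forall>z\<in>V. partial i (partial j (pdl l2 f)) z = partial j (partial i (pdl l2 f)) z"
    using schwarz[OF V F] by blast
  hence "pdl l1 (partial i (partial j (pdl l2 f))) x = pdl l1 (partial j (partial i (pdl l2 f))) x"
    by (rule pdl_cong[OF V _ x])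
  thus ?thesis by (simp add: pdl_append)
qed

lemma pdl_move_front:
  fixes f :: "real^'n::finite \<Rightarrow> real"
  assumes V: "open V" and f: "Cp_on p V f"
  shows "length (u @ a # w) \<le> p \<Longrightarrow> \<forall>y\<in>V. pdl (u @ a # w) f y = pdl (a # u @ w) f y"
proof (induction u)
  case Nil thus ?case by simp
next
  case (Cons b u)
  have IH: "\<forall>y\<in>V. pdl (u @ a # w) f y = pdl (a # u @ w) f y" using Cons by simp
  show ?case
  proof
    fix y assume y: "y \<in> V"
    have "pdl ((b # u) @ a # w) f y = partial b (pdl (u @ a # w) f) y" by simp
    also have "\<dots> = partial b (pdl (a # u @ w) f) y" by (rule partial_cong(1)[OF V IH y])
    also have "\<dots> = pdl ([] @ b # a # u @ w) f y" by simp
    also have "\<dots> = pdl ([] @ a # b # u @ w) f y" by (rule pdl_swap[OF V f _ y]) (use Cons.prems in simp)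
    finally show "pdl ((b # u) @ a # w) f y = pdl (a # (b # u) @ w) f y" by simp
  qed
qed

lemma pdl_perm:
  fixes f :: "real^'n::finite \<Rightarrow> real"
  assumes V: "open V" and f: "Cp_on p V f"
  shows "length l \<le> p \<Longrightarrow> mset l = mset l' \<Longrightarrow> \<forall>x\<in>V. pdl l f x = pdl l' f x"
proof (induction l arbitrary: l')
  case Nil thus ?case by simp
next
  case (Cons a r)
  have "a \<in> set l'" using Cons.prems(2) by (metis list.set_intros(1) set_mset_mset)
  then obtain u w where l': "l' = u @ a # w" by (meson split_list)
  have ms: "mset r = mset (u @ w)" using Cons.prems(2) l' by simp
  have lenl': "length (u @ a # w) \<le> p" using Cons.prems l' by (metis mset_eq_length)
  have IH: "\<forall>x\<in>V. pdl r f x = pdl (u @ w) f x" using Cons.IH[OF _ ms] Cons.prems by simp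
  show ?case
  proof
    fix x assume x: "x \<in> V"
    have "pdl (a # r) f x = partial a (pdl r f) x" by simp
    also have "\<dots> = partial a (pdl (u @ w) f) x" by (rule partial_cong(1)[OF V IH x])
    also have "\<dots> = pdl (a # u @ w) f x" by simp
    also have "\<dots> = pdl (u @ a # w) f x" using pdl_move_front[OF V f lenl'] x by simp
    finally show "pdl (a # r) f x = pdl l' f x" using l' by simp
  qed
qed

section \<open>Multi-index derivatives\<close>

definition mlist :: "('n::finite \<Rightarrow> nat) \<Rightarrow> 'n list" where
  "mlist \<beta> = concat (map (\<lambda>i. replicate (\<beta> i) i) idx_list)"

lemma idx_list_props: "distinct (idx_list :: 'n::finite list) \<and> set idx_list = (UNIV :: 'n set)"
proof -
  have "\<exists>xs::'n list. distinct xs \<and> set xs = UNIV"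
    using finite_distinct_list[of "UNIV :: 'n set"] by auto
  thus ?thesis unfolding idx_list_def by (rule someI_ex)
qed

lemma set_idx_list[simp]: "set (idx_list :: 'n::finite list) = UNIV"
  using idx_list_props by blast

lemma distinct_idx_list[simp]: "distinct (idx_list :: 'n::finite list)"
  using idx_list_props by blast

lemma count_concat_rep:
  "count (mset (concat (map (\<lambda>i. replicate (\<beta> i) i) xs))) k = (\<Sum>i\<leftarrow>xs. if i = k then \<beta> i else 0)"
  by (induction xs) auto

lemma mderiv_mlist: "mderiv \<beta> f = pdl (mlist \<beta>) f"
  by (simp add: mderiv_def mlist_def)

lemma count_mlist: "count (mset (mlist \<beta>)) k = \<beta> k"
proof -
  have "count (mset (mlist \<beta>)) k = (\<Sum>i\<leftarrow>idx_list. count (mset (replicate (\<beta> i) i)) k)"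
    unfolding mlist_def count_concat_rep by (simp add: eq_commute)
  also have "\<dots> = (\<Sum>i\<in>set idx_list. count (mset (replicate (\<beta> i) i)) k)"
    by (rule sum_list_distinct_conv_sum_set) simp
  also have "\<dots> = (\<Sum>i\<in>UNIV. if i = k then \<beta> i else 0)"
    by simp
  also have "\<dots> = \<beta> k" by simp
  finally show ?thesis .
qed

lemma length_mlist: "length (mlist \<beta>) = mdeg \<beta>"
proof -
  have "length (mlist \<beta>) = (\<Sum>i\<leftarrow>idx_list. \<beta> i)"
    unfolding mlist_def by (simp add: length_concat o_def)
  also have "\<dots> = (\<Sum>i\<in>set idx_list. \<beta> i)"
    by (rule sum_list_distinct_conv_sum_set) simp
  also have "\<dots> = mdeg \<beta>" by (simp add: mdeg_def)
  finally show ?thesis .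
qed

lemma mlist_0[simp]: "mlist 0 = []"
  using length_mlist[of 0] by simp

lemma mderiv_0[simp]: "mderiv 0 f = f"
  by (simp add: mderiv_mlist)

definition unitv :: "'n \<Rightarrow> 'n \<Rightarrow> nat" where "unitv i = (\<lambda>k. if k = i then 1 else 0)"

lemma mdeg_unitv[simp]: "mdeg (unitv (i::'n::finite)) = 1"
  by (simp add: mdeg_def unitv_def)

lemma mderiv_comp:
  fixes f :: "real^'n::finite \<Rightarrow> real"
  assumes V: "open V" and f: "Cp_on p V f" and d: "mdeg \<beta> + mdeg \<delta> \<le> p" and x: "x \<in> V"
  shows "mderiv \<delta> (mderiv \<beta> f) x = mderiv (\<beta> + \<delta>) f x"
proof -
  have "mderiv \<delta> (mderiv \<beta> f) x = pdl (mlist \<delta> @ mlist \<beta>) f x"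
    by (simp add: mderiv_mlist pdl_append)
  also have "\<dots> = pdl (mlist (\<beta> + \<delta>)) f x"
  proof (rule pdl_perm[OF V f, rule_format, OF _ _ x])
    show "length (mlist \<delta> @ mlist \<beta>) \<le> p" using d by (simp add: length_mlist)
    show "mset (mlist \<delta> @ mlist \<beta>) = mset (mlist (\<beta> + \<delta>))"
      by (simp add: multiset_eq_iff count_mlist)
  qed
  finally show ?thesis by (simp add: mderiv_mlist)
qed

lemma mderiv_partial:
  fixes f :: "real^'n::finite \<Rightarrow> real"
  assumes V: "open V" and f: "Cp_on p V f" and d: "mdeg \<delta> + 1 \<le> p" and x: "x \<in> V"
  shows "mderiv \<delta> (partial i f) x = mderiv (\<delta> + unitv i) f x"
proof -
  have "mderiv \<delta> (partial i f) x = pdl (mlist \<delta> @ [i]) f x"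
    by (simp add: mderiv_mlist pdl_append)
  also have "\<dots> = pdl (mlist (\<delta> + unitv i)) f x"
  proof (rule pdl_perm[OF V f, rule_format, OF _ _ x])
    show "length (mlist \<delta> @ [i]) \<le> p" using d by (simp add: length_mlist)
    show "mset (mlist \<delta> @ [i]) = mset (mlist (\<delta> + unitv i))"
      by (simp add: multiset_eq_iff count_mlist unitv_def)
  qed
  finally show ?thesis by (simp add: mderiv_mlist)
qed

lemma Cp_mderiv:
  fixes f :: "real^'n::finite \<Rightarrow> real"
  assumes "Cp_on p V f" "mdeg \<beta> \<le> p"
  shows "Cp_on (p - mdeg \<beta>) V (mderiv \<beta> f)"
  using Cp_pdl[OF assms(1), of "mlist \<beta>"] assms(2) by (simp add: mderiv_mlist length_mlist)

lemma mderiv_cont: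
  fixes f :: "real^'n::finite \<Rightarrow> real"
  assumes "Cp_on p V f" "mdeg \<beta> \<le> p"
  shows "continuous_on V (mderiv \<beta> f)"
  using Cp_cont[OF Cp_mderiv[OF assms]] .

lemma mderiv_add:
  assumes "open V" "Cp_on p V f" "Cp_on p V g" "mdeg \<beta> \<le> p" "x \<in> V"
  shows "mderiv \<beta> (\<lambda>z. f z + g z) x = mderiv \<beta> f x + mderiv \<beta> g x"
  using pdl_add[OF assms(1-3), where l="mlist \<beta>" and x=x] assms(4,5) by (simp add: mderiv_mlist length_mlist)

lemma mderiv_scale:
  assumes "open V" "Cp_on p V f" "mdeg \<beta> \<le> p" "x \<in> V"
  shows "mderiv \<beta> (\<lambda>z. r * f z) x = r * mderiv \<beta> f x"
  using pdl_scale[OF assms(1-2), where l="mlist \<beta>" and x=x and r=r] assms(3,4) by (simp add: mderiv_mlist length_mlist)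

lemma mderiv_sum:
  assumes "open V" "finite S" "\<And>s. s \<in> S \<Longrightarrow> Cp_on p V (F s)" "mdeg \<beta> \<le> p" "x \<in> V"
  shows "mderiv \<beta> (\<lambda>z. \<Sum>s\<in>S. F s z) x = (\<Sum>s\<in>S. mderiv \<beta> (F s) x)"
  using pdl_sum[OF assms(1-3), where l="mlist \<beta>" and x=x] assms(4,5) by (simp add: mderiv_mlist length_mlist)

section \<open>Taylor estimate\<close>

lemma finite_delta:
  fixes P :: "'n::finite \<Rightarrow> real \<Rightarrow> bool"
  assumes "\<And>i::'n::finite. \<exists>d>0. P i d"
    and "\<And>i d d'. P i d \<Longrightarrow> 0 < d' \<Longrightarrow> d' \<le> d \<Longrightarrow> P i d'"
  shows "\<exists>d>0. \<forall>i. P i d"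
proof -
  obtain D where D: "\<And>i. D i > 0 \<and> P i (D i)" using assms(1) by metis
  define d where "d = Min (range D)"
  have "d \<in> range D" unfolding d_def by (intro Min_in) auto
  hence dpos: "d > 0" using D by auto
  have "d \<le> D i" for i unfolding d_def by (intro Min_le) auto
  thus ?thesis using dpos D assms(2) by blast
qed

lemma mpow_at_self: "mpow (x - x) \<gamma> = (if \<gamma> = 0 then 1 else 0)"
  by (simp add: mpow_0_vec)

lemma taylor_at_self:
  fixes h :: "real^'n::finite \<Rightarrow> real"
  shows "taylor q x h x = h x"
proof -
  have "taylor q x h x = (\<Sum>\<beta>::'n\<Rightarrow>nat\<in>{\<beta>. mdeg \<beta> \<le> q}. if \<beta> = 0 then h x else 0)"
    unfolding taylor_def by (intro sum.cong) (auto simp: mpow_0_vec)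
  also have "\<dots> = h x" by (subst sum.delta[OF finite_MI]) simp
  finally show ?thesis .
qed

lemma taylor_0:
  fixes h :: "real^'n::finite \<Rightarrow> real"
  shows "taylor 0 x h y = h x"
proof -
  have "{\<beta>::'n\<Rightarrow>nat. mdeg \<beta> \<le> 0} = {0}" using mdeg_eq_0_iff by auto
  thus ?thesis unfolding taylor_def by simp
qed

lemma mfact_add_unit:
  "mfact (\<delta> + unitv i) = mfact \<delta> * (\<delta> i + 1)"
proof -
  let ?P = "\<Prod>k\<in>UNIV-{i}. fact (\<delta> k) :: nat"
  have A: "mfact (\<delta> + unitv i) = fact (\<delta> i + 1) * ?P"
  proof -
    have "mfact (\<delta> + unitv i) = fact ((\<delta> + unitv i) i) * (\<Prod>k\<in>UNIV-{i}. fact ((\<delta> + unitv i) k))"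
      unfolding mfact_def by (rule prod.remove) auto
    also have "(\<Prod>k\<in>UNIV-{i}. fact ((\<delta> + unitv i) k)) = ?P"
      by (intro prod.cong) (auto simp: unitv_def)
    also have "(\<delta> + unitv i) i = \<delta> i + 1" by (simp add: unitv_def)
    finally show ?thesis .
  qed
  have B: "mfact \<delta> = fact (\<delta> i) * ?P"
    unfolding mfact_def by (rule prod.remove) auto
  show ?thesis by (simp only: A B) (simp add: algebra_simps)
qed

lemma deriv_mpow_axis:
  fixes z x :: "real^'n::finite"
  shows "((\<lambda>t. mpow (z + t *\<^sub>R axis i 1 - x) \<gamma>) has_real_derivative
           (real (\<gamma> i) * mpow (z - x) (\<gamma> - unitv i))) (at 0)"
proof -
  let ?C = "\<Prod>k\<in>UNIV-{i}. ((z - x) $ k) ^ \<gamma> k"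
  have eq: "mpow (z + t *\<^sub>R axis i 1 - x) \<gamma> = ((z - x) $ i + t) ^ \<gamma> i * ?C" for t
  proof -
    have "mpow (z + t *\<^sub>R axis i 1 - x) \<gamma> = ((z + t *\<^sub>R axis i 1 - x) $ i) ^ \<gamma> i *
            (\<Prod>k\<in>UNIV-{i}. ((z + t *\<^sub>R axis i 1 - x) $ k) ^ \<gamma> k)"
      unfolding mpow_def by (rule prod.remove) auto
    also have e2: "(\<Prod>k\<in>UNIV-{i}. ((z + t *\<^sub>R axis i 1 - x) $ k) ^ \<gamma> k) = ?C"
      by (intro prod.cong) (auto simp: axis_def)
    have e1: "(z + t *\<^sub>R axis i 1 - x) $ i = (z - x) $ i + t" by (simp add: axis_def)
    show ?thesis using calculation by (simp only: e1 e2)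
  qed
  have d: "((\<lambda>t. ((z - x) $ i + t) ^ \<gamma> i * ?C) has_real_derivative
          (real (\<gamma> i) * ((z - x) $ i + 0) ^ (\<gamma> i - 1) * 1) * ?C) (at 0)"
    by (intro DERIV_mult DERIV_pow DERIV_const derivative_eq_intros) auto
  have "real (\<gamma> i) * mpow (z - x) (\<gamma> - unitv i) = real (\<gamma> i) * (((z - x) $ i) ^ (\<gamma> i - 1) * ?C)"
  proof -
    have "mpow (z - x) (\<gamma> - unitv i) = ((z - x) $ i) ^ ((\<gamma> - unitv i) i) *
            (\<Prod>k\<in>UNIV-{i}. ((z - x) $ k) ^ ((\<gamma> - unitv i) k))"
      unfolding mpow_def by (rule prod.remove) auto
    also have "(\<Prod>k\<in>UNIV-{i}. ((z - x) $ k) ^ ((\<gamma> - unitv i) k)) = ?C"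
      by (intro prod.cong) (auto simp: unitv_def)
    finally have c: "mpow (z - x) (\<gamma> - unitv i) = ((z - x) $ i) ^ ((\<gamma> - unitv i) i) * ?C" .
    have e3: "(\<gamma> - unitv i) i = \<gamma> i - 1" by (simp add: unitv_def)
    show ?thesis by (simp only: c e3)
  qed
  hence val: "real (\<gamma> i) * ((z - x) $ i + 0) ^ (\<gamma> i - 1) * 1 * ?C = real (\<gamma> i) * mpow (z - x) (\<gamma> - unitv i)"
    by (simp only:) (simp add: mult_ac)
  have fe: "(\<lambda>t. mpow (z + t *\<^sub>R axis i 1 - x) \<gamma>) = (\<lambda>t. ((z - x) $ i + t) ^ \<gamma> i * ?C)"
    using eq by (intro ext)
  show ?thesis unfolding fe val[symmetric] by (rule d)
qed

lemma sum_shift_unit: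
  fixes c :: "('n::finite \<Rightarrow> nat) \<Rightarrow> real"
  shows "(\<Sum>\<gamma>\<in>{\<gamma>. mdeg \<gamma> \<le> Suc q}. c \<gamma> / real (mfact \<gamma>) * (real (\<gamma> i) * mpow w (\<gamma> - unitv i)))
       = (\<Sum>\<delta>\<in>{\<delta>. mdeg \<delta> \<le> q}. c (\<delta> + unitv i) / real (mfact \<delta>) * mpow w \<delta>)"
proof -
  let ?F = "\<lambda>\<gamma>. c \<gamma> / real (mfact \<gamma>) * (real (\<gamma> i) * mpow w (\<gamma> - unitv i))"
  have "(\<Sum>\<gamma>\<in>{\<gamma>. mdeg \<gamma> \<le> Suc q}. ?F \<gamma>) = (\<Sum>\<gamma>\<in>(\<lambda>\<delta>. \<delta> + unitv i) ` {\<delta>. mdeg \<delta> \<le> q}. ?F \<gamma>)"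
  proof (rule sum.mono_neutral_right)
    show "finite {\<gamma>::'n\<Rightarrow>nat. mdeg \<gamma> \<le> Suc q}" by (rule finite_MI)
    show "(\<lambda>\<delta>. \<delta> + unitv i) ` {\<delta>. mdeg \<delta> \<le> q} \<subseteq> {\<gamma>. mdeg \<gamma> \<le> Suc q}"
      by (auto simp: mdeg_add)
    show "\<forall>\<gamma>\<in>{\<gamma>. mdeg \<gamma> \<le> Suc q} - (\<lambda>\<delta>. \<delta> + unitv i) ` {\<delta>. mdeg \<delta> \<le> q}. ?F \<gamma> = 0"
    proof
      fix \<gamma> :: "'n \<Rightarrow> nat" assume g: "\<gamma> \<in> {\<gamma>. mdeg \<gamma> \<le> Suc q} - (\<lambda>\<delta>. \<delta> + unitv i) ` {\<delta>. mdeg \<delta> \<le> q}"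
      have "\<gamma> i = 0"
      proof (rule ccontr)
        assume "\<gamma> i \<noteq> 0"
        hence "\<gamma> = (\<gamma> - unitv i) + unitv i" by (auto simp: fun_eq_iff unitv_def)
        moreover have "unitv i \<le> \<gamma>" using \<open>\<gamma> i \<noteq> 0\<close> by (auto simp: le_fun_def unitv_def)
        hence "mdeg (\<gamma> - unitv i) \<le> q" using g mdeg_diff[of "unitv i" \<gamma>] by auto
        ultimately show False using g by blast
      qed
      thus "?F \<gamma> = 0" by simp
    qed
  qed
  also have "\<dots> = (\<Sum>\<delta>\<in>{\<delta>. mdeg \<delta> \<le> q}. ?F (\<delta> + unitv i))"
    by (subst sum.reindex) (auto simp: inj_on_def fun_eq_iff o_def)
  also have "\<dots> = (\<Sum>\<delta>\<in>{\<delta>. mdeg \<delta> \<le> q}. c (\<delta> + unitv i) / real (mfact \<delta>) * mpow w \<delta>)"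
  proof (rule sum.cong[OF refl])
    fix \<delta> :: "'n \<Rightarrow> nat"
    have Y: "\<delta> + unitv i - unitv i = \<delta>" by (auto simp: fun_eq_iff)
    have X: "(\<delta> + unitv i) i = \<delta> i + 1" by (simp add: unitv_def)
    have M: "real (mfact (\<delta> + unitv i)) = real (mfact \<delta>) * (real (\<delta> i) + 1)"
      by (simp add: mfact_add_unit algebra_simps)
    have nz: "real (\<delta> i) + 1 \<noteq> 0" by linarith
    have aux: "a \<noteq> 0 \<Longrightarrow> M' \<noteq> 0 \<Longrightarrow> C / (M' * a) * (a * m) = C / M' * (m::real)" for a M' C m
      by (simp add: field_simps)
    show "?F (\<delta> + unitv i) = c (\<delta> + unitv i) / real (mfact \<delta>) * mpow w \<delta>"
      by (simp only: X Y M of_nat_add of_nat_1) (rule aux[OF nz mfact_nz])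
  qed
  finally show ?thesis .
qed

lemma deriv_taylor_axis:
  fixes h :: "real^'n::finite \<Rightarrow> real"
  assumes V: "open V" and h: "Cp_on (Suc q) V h" and x: "x \<in> V"
  shows "((\<lambda>t. taylor (Suc q) x h (z + t *\<^sub>R axis i 1)) has_real_derivative taylor q x (partial i h) z) (at 0)"
proof -
  have "((\<lambda>t. taylor (Suc q) x h (z + t *\<^sub>R axis i 1)) has_real_derivative
     (\<Sum>\<gamma>\<in>{\<gamma>. mdeg \<gamma> \<le> Suc q}. mderiv \<gamma> h x / real (mfact \<gamma>) * (real (\<gamma> i) * mpow (z - x) (\<gamma> - unitv i)))) (at 0)"
    unfolding taylor_def by (intro DERIV_sum DERIV_cmult deriv_mpow_axis)
  also have "(\<Sum>\<gamma>\<in>{\<gamma>. mdeg \<gamma> \<le> Suc q}. mderiv \<gamma> h x / real (mfact \<gamma>) * (real (\<gamma> i) * mpow (z - x) (\<gamma> - unitv i)))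
     = (\<Sum>\<delta>\<in>{\<delta>. mdeg \<delta> \<le> q}. mderiv (\<delta> + unitv i) h x / real (mfact \<delta>) * mpow (z - x) \<delta>)"
    by (rule sum_shift_unit)
  also have "\<dots> = taylor q x (partial i h) z"
    unfolding taylor_def
    by (intro sum.cong refl) (use mderiv_partial[OF V h _ x] in auto)
  finally show ?thesis .
qed

definition inbox :: "real^'n::finite \<Rightarrow> real^'n \<Rightarrow> real^'n \<Rightarrow> bool" where
  "inbox x y z \<longleftrightarrow> (\<forall>k. (x$k \<le> z$k \<and> z$k \<le> y$k) \<or> (y$k \<le> z$k \<and> z$k \<le> x$k))"

lemma axis_mvt_box:
  fixes F :: "real^'n::finite \<Rightarrow> real" and F' :: "'n \<Rightarrow> real^'n \<Rightarrow> real"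
  assumes der: "\<And>z i. inbox x y z \<Longrightarrow> ((\<lambda>t. F (z + t *\<^sub>R axis i 1)) has_real_derivative F' i z) (at 0)"
      and bnd: "\<And>z i. inbox x y z \<Longrightarrow> \<bar>F' i z\<bar> \<le> B"
  shows "\<bar>F y - F x\<bar> \<le> B * (\<Sum>k\<in>UNIV. \<bar>y$k - x$k\<bar>)"
proof -
  define w where "w A = (\<chi> k. if k \<in> A then y$k else x$k)" for A
  have main: "finite A \<Longrightarrow> \<bar>F (w A) - F x\<bar> \<le> B * (\<Sum>k\<in>A. \<bar>y$k - x$k\<bar>)" for A
  proof (induction A rule: finite_induct)
    case empty
    have "w {} = x" by (simp add: w_def vec_eq_iff)
    thus ?case by simp
  next
    case (insert i A)
    define t where "t = y$i - x$i"
    have wi: "w (insert i A) = w A + t *\<^sub>R axis i 1"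
      using insert.hyps by (auto simp: w_def vec_eq_iff axis_def t_def)
    have box: "inbox x y (w A + s *\<^sub>R axis i 1)" if "0 \<le> s \<and> s \<le> t \<or> t \<le> s \<and> s \<le> 0" for s
      unfolding inbox_def
    proof
      fix k
      show "(x$k \<le> (w A + s *\<^sub>R axis i 1)$k \<and> (w A + s *\<^sub>R axis i 1)$k \<le> y$k) \<or>
            (y$k \<le> (w A + s *\<^sub>R axis i 1)$k \<and> (w A + s *\<^sub>R axis i 1)$k \<le> x$k)"
      proof (cases "k = i")
        case True
        hence "(w A + s *\<^sub>R axis i 1)$k = x$i + s" using insert.hyps by (simp add: w_def axis_def)
        thus ?thesis using that True unfolding t_def by auto
      next
        case False
        hence "(w A + s *\<^sub>R axis i 1)$k = (if k \<in> A then y$k else x$k)" by (simp add: w_def axis_def)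
        thus ?thesis by auto
      qed
    qed
    have "\<exists>s. (0 \<le> s \<and> s \<le> t \<or> t \<le> s \<and> s \<le> 0) \<and>
       F (w A + t *\<^sub>R axis i 1) - F (w A + 0 *\<^sub>R axis i 1) = t * F' i (w A + s *\<^sub>R axis i 1)"
    proof (rule mvt_line[where G="\<lambda>u. F (w A + u *\<^sub>R axis i 1)"])
      fix s assume "0 \<le> s \<and> s \<le> t \<or> t \<le> s \<and> s \<le> 0"
      show "((\<lambda>u. F (w A + u *\<^sub>R axis i 1)) has_real_derivative F' i (w A + s *\<^sub>R axis i 1)) (at s)"
        by (rule deriv_shift_axis, rule der[OF box], fact)
    qed
    then obtain s where s: "0 \<le> s \<and> s \<le> t \<or> t \<le> s \<and> s \<le> 0"
      and eq: "F (w A + t *\<^sub>R axis i 1) - F (w A) = t * F' i (w A + s *\<^sub>R axis i 1)" by auto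
    have "\<bar>F (w (insert i A)) - F (w A)\<bar> = \<bar>t\<bar> * \<bar>F' i (w A + s *\<^sub>R axis i 1)\<bar>"
      unfolding wi eq by (simp add: abs_mult)
    also have "\<dots> \<le> \<bar>t\<bar> * B" by (rule mult_left_mono[OF bnd[OF box[OF s]]]) simp
    finally have 1: "\<bar>F (w (insert i A)) - F (w A)\<bar> \<le> \<bar>t\<bar> * B" .
    have "\<bar>F (w (insert i A)) - F x\<bar> \<le> \<bar>F (w (insert i A)) - F (w A)\<bar> + \<bar>F (w A) - F x\<bar>" by linarith
    also have "\<dots> \<le> \<bar>t\<bar> * B + B * (\<Sum>k\<in>A. \<bar>y$k - x$k\<bar>)" using 1 insert.IH by linarith
    also have "\<dots> = B * (\<Sum>k\<in>insert i A. \<bar>y$k - x$k\<bar>)"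
      using insert.hyps by (simp add: t_def algebra_simps)
    finally show ?case .
  qed
  have "w UNIV = y" by (simp add: w_def vec_eq_iff)
  thus ?thesis using main[of UNIV] by simp
qed

lemma card_pos_real: "real CARD('n::finite) \<ge> 1"
proof -
  have "CARD('n) > 0" by (simp add: finite_UNIV_card_ge_0)
  thus ?thesis by linarith
qed

lemma sum_abs_le_card_norm:
  fixes v :: "real^'n::finite"
  shows "(\<Sum>k\<in>UNIV. \<bar>v$k\<bar>) \<le> real CARD('n) * norm v"
proof -
  have "(\<Sum>k\<in>UNIV. \<bar>v$k\<bar>) \<le> (\<Sum>k\<in>(UNIV::'n set). norm v)"
    by (intro sum_mono component_le_norm_cart)
  thus ?thesis by simp
qed

lemma taylor_est:
  fixes h :: "real^'n::finite \<Rightarrow> real"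
  assumes V: "open V" and b0: "b0 \<in> V"
  shows "Cp_on q V h \<Longrightarrow> \<epsilon> > 0 \<Longrightarrow> \<exists>\<delta>>0. \<forall>x y. norm (x - b0) < \<delta> \<longrightarrow> norm (y - b0) < \<delta> \<longrightarrow>
            \<bar>h y - taylor q x h y\<bar> \<le> \<epsilon> * norm (y - x) ^ q"
proof (induction q arbitrary: h \<epsilon>)
  case 0
  have "continuous_on V h" using Cp_cont[OF "0.prems"(1)] .
  then obtain d where d: "d > 0" "\<And>z. z \<in> V \<Longrightarrow> dist z b0 < d \<Longrightarrow> dist (h z) (h b0) < \<epsilon> / 2"
    using b0 "0.prems"(2) unfolding continuous_on_iff by (metis half_gt_zero)
  obtain r where r: "r > 0" "ball b0 r \<subseteq> V" using V b0 openE by blast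
  show ?case
  proof (intro exI[of _ "min d r"] conjI allI impI)
    show "min d r > 0" using d r by simp
    fix x y assume x: "norm (x - b0) < min d r" and y: "norm (y - b0) < min d r"
    have xV: "x \<in> V" using x r by (auto simp: dist_norm norm_minus_commute)
    have yV: "y \<in> V" using y r by (auto simp: dist_norm norm_minus_commute)
    have "dist (h x) (h b0) < \<epsilon> / 2" using d(2)[OF xV] x by (simp add: dist_norm)
    moreover have "dist (h y) (h b0) < \<epsilon> / 2" using d(2)[OF yV] y by (simp add: dist_norm)
    ultimately have "\<bar>h y - h x\<bar> \<le> \<epsilon>" unfolding dist_real_def by arith
    thus "\<bar>h y - taylor 0 x h y\<bar> \<le> \<epsilon> * norm (y - x) ^ 0" by (simp add: taylor_0)
  qed
next
  case (Suc q)
  note hs = Cp_Suc_D[OF Suc.prems(1)]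
  let ?N = "real CARD('n)"
  have N: "?N \<ge> 1" by (rule card_pos_real)
  have eN: "\<epsilon> / ?N > 0" using Suc.prems(2) N by simp
  have "\<exists>d>0. \<forall>i. \<forall>x y. norm (x - b0) < d \<longrightarrow> norm (y - b0) < d \<longrightarrow>
            \<bar>partial i h y - taylor q x (partial i h) y\<bar> \<le> \<epsilon> / ?N * norm (y - x) ^ q"
  proof (rule finite_delta)
    fix i show "\<exists>d>0. \<forall>x y. norm (x - b0) < d \<longrightarrow> norm (y - b0) < d \<longrightarrow>
            \<bar>partial i h y - taylor q x (partial i h) y\<bar> \<le> \<epsilon> / ?N * norm (y - x) ^ q"
      by (rule Suc.IH[OF hs(3) eN])
  qed auto
  then obtain D where D: "D > 0" and DD: "\<And>i x y. norm (x - b0) < D \<Longrightarrow> norm (y - b0) < D \<Longrightarrow>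
            \<bar>partial i h y - taylor q x (partial i h) y\<bar> \<le> \<epsilon> / ?N * norm (y - x) ^ q" by blast
  obtain r where r: "r > 0" "ball b0 r \<subseteq> V" using V b0 openE by blast
  define \<delta> where "\<delta> = min r D / ?N"
  have m: "min r D \<le> r" "min r D \<le> D" "min r D > 0" using r D by auto
  have NN: "?N * \<delta> = min r D" using N unfolding \<delta>_def by simp
  have dp: "\<delta> > 0" using m N unfolding \<delta>_def by simp
  have a: "\<delta> * 1 \<le> \<delta> * ?N" by (rule mult_left_mono[OF N]) (use dp in simp)
  have NN': "\<delta> * ?N = min r D" using NN by (simp add: mult.commute)
  have dm: "\<delta> \<le> min r D" using a NN' by simp
  have \<delta>: "\<delta> > 0" "?N * \<delta> \<le> r" "?N * \<delta> \<le> D" "\<delta> \<le> r" "\<delta> \<le> D"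
    using dp NN m order_trans[OF dm m(1)] order_trans[OF dm m(2)] by simp_all
  show ?case
  proof (intro exI[of _ \<delta>] conjI allI impI)
    show "\<delta> > 0" by (fact \<delta>(1))
    fix x y assume x: "norm (x - b0) < \<delta>" and y: "norm (y - b0) < \<delta>"
    have xV: "x \<in> V" using x \<delta> r by (auto simp: dist_norm norm_minus_commute)
    have zprops: "z \<in> V \<and> norm (z - b0) < D \<and> norm (z - x) \<le> norm (y - x)" if z: "inbox x y z" for z
    proof -
      have ck: "\<bar>(z - b0)$k\<bar> < \<delta>" for k
      proof -
        have "\<bar>(x - b0)$k\<bar> < \<delta>" using component_le_norm_cart[of "x - b0" k] x by linarith
        moreover have "\<bar>(y - b0)$k\<bar> < \<delta>" using component_le_norm_cart[of "y - b0" k] y by linarith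
        moreover have "(x$k \<le> z$k \<and> z$k \<le> y$k) \<or> (y$k \<le> z$k \<and> z$k \<le> x$k)"
          using z unfolding inbox_def by blast
        ultimately show ?thesis by (auto simp: abs_less_iff)
      qed
      have "norm (z - b0) \<le> (\<Sum>k\<in>UNIV. \<bar>(z - b0)$k\<bar>)" by (rule norm_le_l1_cart)
      also have "\<dots> < (\<Sum>k\<in>(UNIV::'n set). \<delta>)"
      proof (rule sum_strict_mono)
        fix k :: 'n show "\<bar>(z - b0)$k\<bar> < \<delta>" by (rule ck)
      qed auto
      also have "\<dots> = ?N * \<delta>" by simp
      finally have nz: "norm (z - b0) < ?N * \<delta>" .
      have "z \<in> V" using nz \<delta> r by (auto simp: dist_norm norm_minus_commute)
      moreover have "norm (z - b0) < D" using nz \<delta> by linarith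
      moreover have "norm (z - x) \<le> norm (y - x)"
      proof (rule norm_le_componentwise_cart)
        fix k
        have "(x$k \<le> z$k \<and> z$k \<le> y$k) \<or> (y$k \<le> z$k \<and> z$k \<le> x$k)"
          using z unfolding inbox_def by blast
        thus "norm ((z - x)$k) \<le> norm ((y - x)$k)" by auto
      qed
      ultimately show ?thesis by blast
    qed
    define R where "R z = h z - taylor (Suc q) x h z" for z
    define R' where "R' i z = partial i h z - taylor q x (partial i h) z" for i z
    have "\<bar>R y - R x\<bar> \<le> (\<epsilon> / ?N * norm (y - x) ^ q) * (\<Sum>k\<in>UNIV. \<bar>y$k - x$k\<bar>)"
    proof (rule axis_mvt_box)
      fix z i assume z: "inbox x y z"
      have zV: "z \<in> V" using zprops[OF z] by blast
      show "((\<lambda>t. R (z + t *\<^sub>R axis i 1)) has_real_derivative R' i z) (at 0)"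
        unfolding R_def R'_def
        by (rule DERIV_diff[OF partial_deriv[OF hs(2)[OF zV]] deriv_taylor_axis[OF V Suc.prems(1) xV]])
      have "\<bar>R' i z\<bar> \<le> \<epsilon> / ?N * norm (z - x) ^ q"
        unfolding R'_def by (rule DD) (use x \<delta> zprops[OF z] in auto)
      also have "\<dots> \<le> \<epsilon> / ?N * norm (y - x) ^ q"
        using zprops[OF z] eN by (intro mult_left_mono power_mono) auto
      finally show "\<bar>R' i z\<bar> \<le> \<epsilon> / ?N * norm (y - x) ^ q" .
    qed
    also have "\<dots> \<le> (\<epsilon> / ?N * norm (y - x) ^ q) * (?N * norm (y - x))"
    proof (rule mult_left_mono)
      show "(\<Sum>k\<in>UNIV. \<bar>y$k - x$k\<bar>) \<le> ?N * norm (y - x)" using sum_abs_le_card_norm[of "y - x"] by simp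
      show "0 \<le> \<epsilon> / ?N * norm (y - x) ^ q" using eN by (intro mult_nonneg_nonneg) auto
    qed
    also have "\<dots> = \<epsilon> * norm (y - x) ^ Suc q" using N by (simp add: field_simps)
    finally show "\<bar>h y - taylor (Suc q) x h y\<bar> \<le> \<epsilon> * norm (y - x) ^ Suc q"
      by (simp add: R_def taylor_at_self)
  qed
qed

section \<open>Convergence part\<close>

lemma sum_ge_reindex:
  fixes F :: "('n::finite \<Rightarrow> nat) \<Rightarrow> real"
  assumes "mdeg \<beta> \<le> p"
  shows "(\<Sum>\<gamma>\<in>{\<gamma>. mdeg \<gamma> \<le> p \<and> \<beta> \<le> \<gamma>}. F \<gamma>) = (\<Sum>\<delta>\<in>{\<delta>. mdeg \<delta> \<le> p - mdeg \<beta>}. F (\<beta> + \<delta>))"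
proof (rule sum.reindex_bij_witness[where j="\<lambda>\<gamma>::'n\<Rightarrow>nat. \<gamma> - \<beta>" and i="\<lambda>\<delta>::'n\<Rightarrow>nat. \<beta> + \<delta>"])
  fix \<gamma> :: "'n \<Rightarrow> nat" assume g: "\<gamma> \<in> {\<gamma>. mdeg \<gamma> \<le> p \<and> \<beta> \<le> \<gamma>}"
  show "\<beta> + (\<gamma> - \<beta>) = \<gamma>" using g by (auto simp: fun_eq_iff le_fun_def)
  show "\<gamma> - \<beta> \<in> {\<delta>. mdeg \<delta> \<le> p - mdeg \<beta>}" using g mdeg_diff[of \<beta> \<gamma>] by auto
  show "F (\<beta> + (\<gamma> - \<beta>)) = F \<gamma>" using g by (metis (mono_tags) \<open>\<beta> + (\<gamma> - \<beta>) = \<gamma>\<close>)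
next
  fix \<delta> :: "'n \<Rightarrow> nat" assume d: "\<delta> \<in> {\<delta>. mdeg \<delta> \<le> p - mdeg \<beta>}"
  show "\<beta> + \<delta> - \<beta> = \<delta>" by (auto simp: fun_eq_iff)
  show "\<beta> + \<delta> \<in> {\<gamma>. mdeg \<gamma> \<le> p \<and> \<beta> \<le> \<gamma>}" using d assms by (auto simp: mdeg_add le_fun_def)
qed

lemma pdual_taylor_shift:
  fixes g :: "real^'m::finite \<Rightarrow> real"
  assumes V: "open V" and g: "Cp_on p V g" and x: "x \<in> V" and \<zeta>: "\<zeta> \<in> pdual p"
  shows "\<zeta> (taylor p x g) = (\<Sum>\<beta>\<in>{\<beta>. mdeg \<beta> \<le> p}. zcomp \<zeta> y \<beta> * taylor (p - mdeg \<beta>) x (mderiv \<beta> g) y)"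
proof -
  let ?D = "\<lambda>\<gamma>. mderiv \<gamma> g x"
  let ?m = "\<lambda>\<gamma>. mpow (y - x) \<gamma> / real (mfact \<gamma>)"
  have "\<zeta> (taylor p x g) = (\<Sum>\<gamma>\<in>{\<gamma>. mdeg \<gamma> \<le> p}. ?D \<gamma> * zcomp \<zeta> x \<gamma>)" by (rule pdual_taylor[OF \<zeta>])
  also have "\<dots> = (\<Sum>\<gamma>\<in>{\<gamma>. mdeg \<gamma> \<le> p}. \<Sum>\<beta>\<in>{\<beta>. mdeg \<beta> \<le> p}.
                     (if \<beta> \<le> \<gamma> then ?D \<gamma> * ?m (\<gamma> - \<beta>) * zcomp \<zeta> y \<beta> else 0))"
  proof (rule sum.cong[OF refl])
    fix \<gamma> :: "'m \<Rightarrow> nat" assume g: "\<gamma> \<in> {\<gamma>. mdeg \<gamma> \<le> p}"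
    have "?D \<gamma> * zcomp \<zeta> x \<gamma> = ?D \<gamma> * (\<Sum>\<beta>\<in>{\<beta>. \<beta> \<le> \<gamma>}. ?m (\<gamma> - \<beta>) * zcomp \<zeta> y \<beta>)"
      using zcomp_reexpand[OF \<zeta>, of \<gamma> x y] g by simp
    also have "\<dots> = (\<Sum>\<beta>\<in>{\<beta>. \<beta> \<le> \<gamma>}. ?D \<gamma> * ?m (\<gamma> - \<beta>) * zcomp \<zeta> y \<beta>)"
      by (simp add: sum_distrib_left mult.assoc)
    also have "{\<beta>. \<beta> \<le> \<gamma>} = {\<beta>\<in>{\<beta>. mdeg \<beta> \<le> p}. \<beta> \<le> \<gamma>}"
      using g by (auto dest: mdeg_mono)
    also have "(\<Sum>\<beta>\<in>{\<beta>\<in>{\<beta>. mdeg \<beta> \<le> p}. \<beta> \<le> \<gamma>}. ?D \<gamma> * ?m (\<gamma> - \<beta>) * zcomp \<zeta> y \<beta>) =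
        (\<Sum>\<beta>\<in>{\<beta>. mdeg \<beta> \<le> p}. (if \<beta> \<le> \<gamma> then ?D \<gamma> * ?m (\<gamma> - \<beta>) * zcomp \<zeta> y \<beta> else 0))"
      by (rule sum.inter_filter[OF finite_MI])
    finally show "?D \<gamma> * zcomp \<zeta> x \<gamma> = \<dots>" .
  qed
  also have "\<dots> = (\<Sum>\<beta>\<in>{\<beta>. mdeg \<beta> \<le> p}. \<Sum>\<gamma>\<in>{\<gamma>. mdeg \<gamma> \<le> p}.
                     (if \<beta> \<le> \<gamma> then ?D \<gamma> * ?m (\<gamma> - \<beta>) * zcomp \<zeta> y \<beta> else 0))"
    by (rule sum.swap)
  also have "\<dots> = (\<Sum>\<beta>\<in>{\<beta>. mdeg \<beta> \<le> p}. zcomp \<zeta> y \<beta> * taylor (p - mdeg \<beta>) x (mderiv \<beta> g) y)"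
  proof (rule sum.cong[OF refl])
    fix \<beta> :: "'m \<Rightarrow> nat" assume b: "\<beta> \<in> {\<beta>. mdeg \<beta> \<le> p}"
    have "(\<Sum>\<gamma>\<in>{\<gamma>. mdeg \<gamma> \<le> p}. (if \<beta> \<le> \<gamma> then ?D \<gamma> * ?m (\<gamma> - \<beta>) * zcomp \<zeta> y \<beta> else 0))
        = (\<Sum>\<gamma>\<in>{\<gamma>\<in>{\<gamma>. mdeg \<gamma> \<le> p}. \<beta> \<le> \<gamma>}. ?D \<gamma> * ?m (\<gamma> - \<beta>) * zcomp \<zeta> y \<beta>)"
      by (rule sum.inter_filter[OF finite_MI, symmetric])
    also have "{\<gamma>\<in>{\<gamma>. mdeg \<gamma> \<le> p}. \<beta> \<le> \<gamma>} = {\<gamma>. mdeg \<gamma> \<le> p \<and> \<beta> \<le> \<gamma>}" by auto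
    also have "(\<Sum>\<gamma>\<in>{\<gamma>. mdeg \<gamma> \<le> p \<and> \<beta> \<le> \<gamma>}. ?D \<gamma> * ?m (\<gamma> - \<beta>) * zcomp \<zeta> y \<beta>)
        = (\<Sum>\<delta>\<in>{\<delta>. mdeg \<delta> \<le> p - mdeg \<beta>}. ?D (\<beta> + \<delta>) * ?m (\<beta> + \<delta> - \<beta>) * zcomp \<zeta> y \<beta>)"
      using b by (intro sum_ge_reindex) auto
    also have "\<dots> = zcomp \<zeta> y \<beta> * (\<Sum>\<delta>\<in>{\<delta>. mdeg \<delta> \<le> p - mdeg \<beta>}. mderiv \<delta> (mderiv \<beta> g) x / real (mfact \<delta>) * mpow (y - x) \<delta>)"
    proof -
      have eqs: "?D (\<beta> + \<delta>) * ?m (\<beta> + \<delta> - \<beta>) * zcomp \<zeta> y \<beta> =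
            zcomp \<zeta> y \<beta> * (mderiv \<delta> (mderiv \<beta> g) x / real (mfact \<delta>) * mpow (y - x) \<delta>)"
        if "\<delta> \<in> {\<delta>. mdeg \<delta> \<le> p - mdeg \<beta>}" for \<delta>
      proof -
        have "\<beta> + \<delta> - \<beta> = \<delta>" by (auto simp: fun_eq_iff)
        moreover have "mderiv \<delta> (mderiv \<beta> g) x = ?D (\<beta> + \<delta>)"
          using that b by (intro mderiv_comp[OF V g _ x]) auto
        ultimately show ?thesis by simp
      qed
      show ?thesis unfolding sum_distrib_left by (rule sum.cong[OF refl eqs])
    qed
    also have "\<dots> = zcomp \<zeta> y \<beta> * taylor (p - mdeg \<beta>) x (mderiv \<beta> g) y"
      unfolding taylor_def by simp
    finally show "(\<Sum>\<gamma>\<in>{\<gamma>. mdeg \<gamma> \<le> p}. (if \<beta> \<le> \<gamma> then ?D \<gamma> * ?m (\<gamma> - \<beta>) * zcomp \<zeta> y \<beta> else 0))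
        = zcomp \<zeta> y \<beta> * taylor (p - mdeg \<beta>) x (mderiv \<beta> g) y" .
  qed
  finally show ?thesis .
qed

lemma pdual_sumI:
  assumes "finite I" "\<And>i. i \<in> I \<Longrightarrow> \<zeta> i \<in> pdual p"
  shows "(\<lambda>P. \<Sum>i\<in>I. \<zeta> i P) \<in> pdual p"
  using assms unfolding pdual_def by (auto simp: sum.distrib sum_distrib_left)

lemma mpow_tendsto:
  assumes "(f \<longlongrightarrow> a) F"
  shows "((\<lambda>x. mpow (f x) \<gamma>) \<longlongrightarrow> mpow a \<gamma>) F"
  unfolding mpow_def by (intro tendsto_prod tendsto_power tendsto_vec_nth assms)

lemma tendsto_0_ev:
  fixes f :: "nat \<Rightarrow> real"
  assumes "\<And>\<epsilon>. \<epsilon> > 0 \<Longrightarrow> eventually (\<lambda>j. \<bar>f j\<bar> \<le> \<epsilon>) sequentially"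
  shows "f \<longlonglongrightarrow> 0"
  unfolding tendsto_iff
proof (intro allI impI)
  fix e :: real assume "e > 0"
  hence "eventually (\<lambda>j. \<bar>f j\<bar> \<le> e / 2) sequentially" by (intro assms) simp
  thus "eventually (\<lambda>j. dist (f j) 0 < e) sequentially"
    by eventually_elim (use \<open>e > 0\<close> in auto)
qed

lemma cont_tendsto_V:
  fixes h :: "real^'m::finite \<Rightarrow> real"
  assumes "open V" "continuous_on V h" "b0 \<in> V" "(f \<longlongrightarrow> b0) F"
  shows "((\<lambda>j. h (f j)) \<longlongrightarrow> h b0) F"
proof -
  have "isCont h b0" using assms(1-3) continuous_on_eq_continuous_at by blast
  thus ?thesis using assms(4) by (rule isCont_tendsto_compose)
qed

lemma conv_main:
  fixes g :: "real^'m::finite \<Rightarrow> real" and b :: "nat \<Rightarrow> nat \<Rightarrow> real^'m"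
    and \<eta> :: "nat \<Rightarrow> nat \<Rightarrow> (real^'m \<Rightarrow> real) \<Rightarrow> real"
  assumes V: "open V" and g: "Cp_on p V g" and b0: "b0 \<in> V"
    and bV: "\<And>i j. i \<le> k \<Longrightarrow> b i j \<in> V"
    and bconv: "\<And>i. i \<le> k \<Longrightarrow> (\<lambda>j. b i j) \<longlonglongrightarrow> b0"
    and \<eta>d: "\<And>i j. i \<le> k \<Longrightarrow> \<eta> i j \<in> pdual p"
    and \<eta>0: "\<eta>0 \<in> pdual p"
    and dt: "dual_tendsto p (\<lambda>j P. \<Sum>i\<le>k. \<eta> i j P) \<eta>0"
    and bnd: "\<And>i j \<beta>. i \<le> k \<Longrightarrow> mdeg \<beta> \<le> p \<Longrightarrow>
                 norm (b i j - b 0 j) ^ (p - mdeg \<beta>) * \<bar>zcomp (\<eta> i j) (b i j) \<beta>\<bar> \<le> c"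
  shows "(\<lambda>j. \<Sum>i\<le>k. \<eta> i j (taylor p (b i j) g)) \<longlonglongrightarrow> \<eta>0 (taylor p b0 g)"
proof -
  define Z where "Z j = (\<lambda>P. \<Sum>i\<le>k. \<eta> i j P)" for j
  have Zd: "Z j \<in> pdual p" for j unfolding Z_def by (rule pdual_sumI) (auto intro: \<eta>d)
  define E where "E i \<beta> j = zcomp (\<eta> i j) (b i j) \<beta> *
      (mderiv \<beta> g (b i j) - taylor (p - mdeg \<beta>) (b 0 j) (mderiv \<beta> g) (b i j))" for i \<beta> j
  have split: "(\<Sum>i\<le>k. \<eta> i j (taylor p (b i j) g)) = Z j (taylor p (b 0 j) g) + (\<Sum>i\<le>k. \<Sum>\<beta>\<in>{\<beta>. mdeg \<beta> \<le> p}. E i \<beta> j)" for j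
  proof -
    have each: "\<eta> i j (taylor p (b i j) g) = \<eta> i j (taylor p (b 0 j) g) + (\<Sum>\<beta>\<in>{\<beta>. mdeg \<beta> \<le> p}. E i \<beta> j)"
      if i: "i \<le> k" for i
    proof -
      have A: "\<eta> i j (taylor p (b i j) g) = (\<Sum>\<beta>\<in>{\<beta>. mdeg \<beta> \<le> p}. mderiv \<beta> g (b i j) * zcomp (\<eta> i j) (b i j) \<beta>)"
        by (rule pdual_taylor[OF \<eta>d[OF i]])
      also have "\<dots> = (\<Sum>\<beta>\<in>{\<beta>. mdeg \<beta> \<le> p}. zcomp (\<eta> i j) (b i j) \<beta> * mderiv \<beta> g (b i j))"
        by (simp add: mult.commute)
      finally have A': "\<eta> i j (taylor p (b i j) g) = \<dots>" .
      have B: "\<eta> i j (taylor p (b 0 j) g) = (\<Sum>\<beta>\<in>{\<beta>. mdeg \<beta> \<le> p}. zcomp (\<eta> i j) (b i j) \<beta> *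
                 taylor (p - mdeg \<beta>) (b 0 j) (mderiv \<beta> g) (b i j))"
        by (rule pdual_taylor_shift[OF V g bV[of 0 j] \<eta>d[OF i]]) simp
      have C: "(\<Sum>\<beta>\<in>{\<beta>. mdeg \<beta> \<le> p}. E i \<beta> j) =
          (\<Sum>\<beta>\<in>{\<beta>. mdeg \<beta> \<le> p}. zcomp (\<eta> i j) (b i j) \<beta> * mderiv \<beta> g (b i j)) -
          (\<Sum>\<beta>\<in>{\<beta>. mdeg \<beta> \<le> p}. zcomp (\<eta> i j) (b i j) \<beta> * taylor (p - mdeg \<beta>) (b 0 j) (mderiv \<beta> g) (b i j))"
        unfolding E_def by (simp add: right_diff_distrib sum_subtractf)
      show ?thesis using A' B C by linarith
    qed
    have "(\<Sum>i\<le>k. \<eta> i j (taylor p (b i j) g)) =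
          (\<Sum>i\<le>k. \<eta> i j (taylor p (b 0 j) g) + (\<Sum>\<beta>\<in>{\<beta>. mdeg \<beta> \<le> p}. E i \<beta> j))"
      by (rule sum.cong[OF refl]) (use each in auto)
    also have "\<dots> = Z j (taylor p (b 0 j) g) + (\<Sum>i\<le>k. \<Sum>\<beta>\<in>{\<beta>. mdeg \<beta> \<le> p}. E i \<beta> j)"
      by (simp add: sum.distrib Z_def)
    finally show ?thesis .
  qed
  have b0j: "(\<lambda>j. b 0 j) \<longlonglongrightarrow> b0" using bconv[of 0] by simp
  have E0: "(\<lambda>j. E i \<beta> j) \<longlonglongrightarrow> 0" if i: "i \<le> k" and \<beta>: "mdeg \<beta> \<le> p" for i \<beta>
  proof (rule tendsto_0_ev)
    fix \<epsilon> :: real assume \<epsilon>: "\<epsilon> > 0"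
    define \<epsilon>' where "\<epsilon>' = \<epsilon> / (\<bar>c\<bar> + 1)"
    have cpos: "\<bar>c\<bar> + 1 > 0" by simp
    have \<epsilon>': "\<epsilon>' > 0" unfolding \<epsilon>'_def using \<epsilon> cpos by simp
    obtain \<delta> where \<delta>: "\<delta> > 0" and T: "\<And>x y. norm (x - b0) < \<delta> \<Longrightarrow> norm (y - b0) < \<delta> \<Longrightarrow>
        \<bar>mderiv \<beta> g y - taylor (p - mdeg \<beta>) x (mderiv \<beta> g) y\<bar> \<le> \<epsilon>' * norm (y - x) ^ (p - mdeg \<beta>)"
      using taylor_est[OF V b0 Cp_mderiv[OF g \<beta>] \<epsilon>'] by blast
    have ev1: "eventually (\<lambda>j. dist (b i j) b0 < \<delta>) sequentially" using bconv[OF i] \<delta> by (rule tendstoD)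
    have ev0: "eventually (\<lambda>j. dist (b 0 j) b0 < \<delta>) sequentially" using b0j \<delta> by (rule tendstoD)
    show "eventually (\<lambda>j. \<bar>E i \<beta> j\<bar> \<le> \<epsilon>) sequentially"
      using ev1 ev0
    proof eventually_elim
      case (elim j)
      let ?z = "\<bar>zcomp (\<eta> i j) (b i j) \<beta>\<bar>" and ?n = "norm (b i j - b 0 j) ^ (p - mdeg \<beta>)"
      have "\<bar>E i \<beta> j\<bar> = ?z * \<bar>mderiv \<beta> g (b i j) - taylor (p - mdeg \<beta>) (b 0 j) (mderiv \<beta> g) (b i j)\<bar>"
        unfolding E_def by (simp add: abs_mult)
      also have "\<dots> \<le> ?z * (\<epsilon>' * ?n)"
        by (rule mult_left_mono[OF T]) (use elim in \<open>auto simp: dist_norm\<close>)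
      also have "\<dots> = \<epsilon>' * (?n * ?z)" by simp
      also have "\<dots> \<le> \<epsilon>' * c" by (rule mult_left_mono[OF bnd[OF i \<beta>]]) (use \<epsilon>' in simp)
      also have "\<dots> \<le> \<epsilon>' * (\<bar>c\<bar> + 1)" by (rule mult_left_mono) (use \<epsilon>' in auto)
      also have "\<dots> = \<epsilon>" unfolding \<epsilon>'_def using cpos by simp
      finally show ?case .
    qed
  qed
  have F: "(\<lambda>j. Z j (taylor p (b 0 j) g)) \<longlonglongrightarrow> \<eta>0 (taylor p b0 g)"
  proof -
    let ?m = "\<lambda>x \<gamma>. mpow x \<gamma> / real (mfact \<gamma>)"
    have seq: "Z j (taylor p (b 0 j) g) = (\<Sum>\<gamma>\<in>{\<gamma>. mdeg \<gamma> \<le> p}. mderiv \<gamma> g (b 0 j) *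
          (\<Sum>\<beta>\<in>{\<beta>. \<beta> \<le> \<gamma>}. ?m (b0 - b 0 j) (\<gamma> - \<beta>) * zcomp (Z j) b0 \<beta>))" for j
    proof -
      have "Z j (taylor p (b 0 j) g) = (\<Sum>\<gamma>\<in>{\<gamma>. mdeg \<gamma> \<le> p}. mderiv \<gamma> g (b 0 j) * zcomp (Z j) (b 0 j) \<gamma>)"
        by (rule pdual_taylor[OF Zd])
      also have "\<dots> = (\<Sum>\<gamma>\<in>{\<gamma>. mdeg \<gamma> \<le> p}. mderiv \<gamma> g (b 0 j) *
          (\<Sum>\<beta>\<in>{\<beta>. \<beta> \<le> \<gamma>}. ?m (b0 - b 0 j) (\<gamma> - \<beta>) * zcomp (Z j) b0 \<beta>))"
        by (rule sum.cong[OF refl], subst zcomp_reexpand[OF Zd, where y=b0], auto)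
      finally show ?thesis .
    qed
    have lim: "\<eta>0 (taylor p b0 g) = (\<Sum>\<gamma>\<in>{\<gamma>. mdeg \<gamma> \<le> p}. mderiv \<gamma> g b0 *
          (\<Sum>\<beta>\<in>{\<beta>. \<beta> \<le> \<gamma>}. ?m (b0 - b0) (\<gamma> - \<beta>) * zcomp \<eta>0 b0 \<beta>))"
    proof -
      have "\<eta>0 (taylor p b0 g) = (\<Sum>\<gamma>\<in>{\<gamma>. mdeg \<gamma> \<le> p}. mderiv \<gamma> g b0 * zcomp \<eta>0 b0 \<gamma>)"
        by (rule pdual_taylor[OF \<eta>0])
      also have "\<dots> = (\<Sum>\<gamma>\<in>{\<gamma>. mdeg \<gamma> \<le> p}. mderiv \<gamma> g b0 *
          (\<Sum>\<beta>\<in>{\<beta>. \<beta> \<le> \<gamma>}. ?m (b0 - b0) (\<gamma> - \<beta>) * zcomp \<eta>0 b0 \<beta>))"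
        by (rule sum.cong[OF refl], subst zcomp_reexpand[OF \<eta>0, where y=b0], auto)
      finally show ?thesis .
    qed
    have zc: "(\<lambda>j. zcomp (Z j) b0 \<beta>) \<longlonglongrightarrow> zcomp \<eta>0 b0 \<beta>" if "mdeg \<beta> \<le> p" for \<beta>
    proof -
      have "(\<lambda>x. mpow (x - b0) \<beta> / real (mfact \<beta>)) \<in> polys p" by (rule mpow_shift_polys[OF that])
      hence "(\<lambda>j. \<Sum>i\<le>k. \<eta> i j (\<lambda>x. mpow (x - b0) \<beta> / real (mfact \<beta>))) \<longlonglongrightarrow> \<eta>0 (\<lambda>x. mpow (x - b0) \<beta> / real (mfact \<beta>))"
        using dt unfolding dual_tendsto_def by blast
      thus ?thesis unfolding zcomp_def Z_def by simp
    qed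
    have t1: "(\<lambda>j. mderiv \<gamma> g (b 0 j)) \<longlonglongrightarrow> mderiv \<gamma> g b0" if "\<gamma> \<in> {\<gamma>. mdeg \<gamma> \<le> p}" for \<gamma>
      using that by (intro cont_tendsto_V[OF V _ b0 b0j] mderiv_cont[OF g]) auto
    have t2: "(\<lambda>j. ?m (b0 - b 0 j) \<delta>) \<longlonglongrightarrow> ?m (b0 - b0) \<delta>" for \<delta>
      by (intro tendsto_divide mpow_tendsto tendsto_diff tendsto_const b0j) (simp add: mfact_pos)
    have t3: "(\<lambda>j. zcomp (Z j) b0 \<beta>) \<longlonglongrightarrow> zcomp \<eta>0 b0 \<beta>" if "\<gamma> \<in> {\<gamma>. mdeg \<gamma> \<le> p}" "\<beta> \<in> {\<beta>. \<beta> \<le> \<gamma>}" for \<gamma> \<beta>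
      using that by (intro zc) (auto dest: mdeg_mono)
    show ?thesis unfolding seq lim
      by (intro tendsto_sum tendsto_mult t1 t2 t3)
  qed
  have "(\<lambda>j. \<Sum>i\<le>k. \<Sum>\<beta>\<in>{\<beta>. mdeg \<beta> \<le> p}. E i \<beta> j) \<longlonglongrightarrow> (\<Sum>i\<le>k. \<Sum>\<beta>\<in>{\<beta>::'m\<Rightarrow>nat. mdeg \<beta> \<le> p}. (0::real))"
    by (intro tendsto_sum E0) auto
  hence E: "(\<lambda>j. \<Sum>i\<le>k. \<Sum>\<beta>\<in>{\<beta>. mdeg \<beta> \<le> p}. E i \<beta> j) \<longlonglongrightarrow> 0" by simp
  show ?thesis unfolding split using tendsto_add[OF F E] by simp
qed

section \<open>Vanishing order\<close>

definition van :: "nat \<Rightarrow> nat \<Rightarrow> (real^'m::finite \<Rightarrow> real) \<Rightarrow> real^'m \<Rightarrow> bool" where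
  "van p r f y \<longleftrightarrow> (\<forall>l. length l < r \<longrightarrow> length l \<le> p \<longrightarrow> pdl l f y = 0)"

lemma vanD: "van p r f y \<Longrightarrow> length l < r \<Longrightarrow> length l \<le> p \<Longrightarrow> pdl l f y = 0"
  unfolding van_def by blast

lemma vanI: "(\<And>l. length l < r \<Longrightarrow> length l \<le> p \<Longrightarrow> pdl l f y = 0) \<Longrightarrow> van p r f y"
  unfolding van_def by blast

lemma van_mono:
  assumes "van p r f y" "r' \<le> r" "p' \<le> p"
  shows "van p' r' f y"
  by (rule vanI, rule vanD[OF assms(1)]) (use assms in auto)

lemma van_0: "van p 0 f y"
  by (rule vanI) auto

lemma van_partial: "van (Suc p') s g y \<Longrightarrow> van p' (s - 1) (partial i g) y"
proof (rule vanI)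
  fix l :: "'a list" assume "van (Suc p') s g y" "length l < s - 1" "length l \<le> p'"
  hence "pdl (l @ [i]) g y = 0" by (intro vanD) auto
  thus "pdl l (partial i g) y = 0" by (simp add: pdl_append)
qed

lemma van_mult_aux:
  fixes y :: "real^'m::finite"
  assumes V: "open V" and y: "y \<in> V"
  shows "\<forall>p f g r s (l::'m list). length l = n \<longrightarrow> Cp_on p V f \<longrightarrow> Cp_on p V g \<longrightarrow> van p r f y \<longrightarrow> van p s g y
           \<longrightarrow> length l < r + s \<longrightarrow> length l \<le> p \<longrightarrow> pdl l (\<lambda>z. f z * g z) y = 0"
proof (induction n)
  case 0
  show ?case
  proof (intro allI impI)
    fix p f g r s and l :: "'m list"
    assume a: "length l = 0" "Cp_on p V f" "Cp_on p V g" "van p r f y" "van p s g y" "length l < r + s" "length l \<le> p"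
    hence l: "l = []" by simp
    have "r > 0 \<or> s > 0" using a(6) l by simp
    thus "pdl l (\<lambda>z. f z * g z) y = 0"
    proof
      assume "r > 0"
      hence "pdl [] f y = 0" by (intro vanD[OF a(4)]) auto
      thus ?thesis using l by simp
    next
      assume "s > 0"
      hence "pdl [] g y = 0" by (intro vanD[OF a(5)]) auto
      thus ?thesis using l by simp
    qed
  qed
next
  case (Suc n)
  show ?case
  proof (intro allI impI)
    fix p f g r s and l :: "'m list"
    assume len: "length l = Suc n" and f: "Cp_on p V f" and g: "Cp_on p V g" and vf: "van p r f y"
      and vg: "van p s g y" and lr: "length l < r + s" and lp: "length l \<le> p"
    obtain l' i where l: "l = l' @ [i]" using len by (metis length_Suc_conv_rev)
    have len': "length l' = n" using len l by simp
    obtain p' where p: "p = Suc p'" using lp l by (cases p) auto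
    have fS: "Cp_on (Suc p') V f" using f p by simp
    have gS: "Cp_on (Suc p') V g" using g p by simp
    note fs = Cp_Suc_D[OF fS] and gs = Cp_Suc_D[OF gS]
    have f': "Cp_on p' V f" and g': "Cp_on p' V g" using Cp_mono[OF _ fS] Cp_mono[OF _ gS] by auto
    have fg1: "Cp_on p' V (\<lambda>z. f z * partial i g z)" by (rule Cp_mult[OF V f' gs(3)])
    have fg2: "Cp_on p' V (\<lambda>z. partial i f z * g z)" by (rule Cp_mult[OF V fs(3) g'])
    have vf': "van p' r f y" "van p' (r - 1) f y" using van_mono[OF vf] p by auto
    have vg': "van p' s g y" "van p' (s - 1) g y" using van_mono[OF vg] p by auto
    have vpf: "van p' (r - 1) (partial i f) y" using van_partial[of p' r f y i] vf p by simp
    have vpg: "van p' (s - 1) (partial i g) y" using van_partial[of p' s g y i] vg p by simp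
    have IH: "\<And>f g r s. Cp_on p' V f \<Longrightarrow> Cp_on p' V g \<Longrightarrow> van p' r f y \<Longrightarrow> van p' s g y \<Longrightarrow>
                length l' < r + s \<Longrightarrow> pdl l' (\<lambda>z. f z * g z) y = 0"
      using Suc.IH len' lp l p by auto
    have "pdl l (\<lambda>z. f z * g z) y = pdl l' (partial i (\<lambda>z. f z * g z)) y" by (simp add: l pdl_append)
    also have "\<dots> = pdl l' (\<lambda>z. f z * partial i g z + partial i f z * g z) y"
    proof (rule pdl_cong[OF V _ y])
      show "\<forall>z\<in>V. partial i (\<lambda>z. f z * g z) z = f z * partial i g z + partial i f z * g z"
      proof
        fix z assume z: "z \<in> V"
        show "partial i (\<lambda>z. f z * g z) z = f z * partial i g z + partial i f z * g z"
          by (rule partial_mult(1)[OF fs(2)[OF z] gs(2)[OF z]])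
      qed
    qed
    also have "\<dots> = pdl l' (\<lambda>z. f z * partial i g z) y + pdl l' (\<lambda>z. partial i f z * g z) y"
      by (rule pdl_add[OF V fg1 fg2 _ y]) (use len' lp l p in simp)
    also have "pdl l' (\<lambda>z. f z * partial i g z) y = 0"
    proof (cases "s = 0")
      case True
      show ?thesis by (rule IH[OF f' gs(3) vf'(2) van_0]) (use lr l True in simp)
    next
      case False
      show ?thesis by (rule IH[OF f' gs(3) vf'(1) vpg]) (use lr l False in simp)
    qed
    also have "pdl l' (\<lambda>z. partial i f z * g z) y = 0"
    proof (cases "r = 0")
      case True
      show ?thesis by (rule IH[OF fs(3) g' van_0 vg'(2)]) (use lr l True in simp)
    next
      case False
      show ?thesis by (rule IH[OF fs(3) g' vpf vg'(1)]) (use lr l False in simp)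
    qed
    finally show "pdl l (\<lambda>z. f z * g z) y = 0" by simp
  qed
qed

lemma van_mult:
  fixes y :: "real^'m::finite"
  assumes V: "open V" and y: "y \<in> V" and "Cp_on p V f" "Cp_on p V g" "van p r f y" "van p s g y"
  shows "van p (r + s) (\<lambda>z. f z * g z) y"
  by (rule vanI) (use van_mult_aux[OF V y] assms(3-6) in blast)

lemma van_power:
  fixes y :: "real^'m::finite"
  assumes V: "open V" and y: "y \<in> V" and f: "Cp_on p V f" and v: "van p r f y"
  shows "van p (n * r) (\<lambda>z. f z ^ n) y"
proof (induction n)
  case 0 show ?case by (simp add: van_0)
next
  case (Suc n)
  have "van p (r + n * r) (\<lambda>z. f z * f z ^ n) y"
    by (rule van_mult[OF V y f Cp_power[OF V f] v Suc.IH])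
  thus ?case by simp
qed

lemma van_prod:
  fixes y :: "real^'m::finite"
  assumes V: "open V" and y: "y \<in> V" and S: "finite S"
    and F: "\<And>s. s \<in> S \<Longrightarrow> Cp_on p V (F s)" and v: "\<And>s. s \<in> S \<Longrightarrow> van p (r s) (F s) y"
  shows "van p (\<Sum>s\<in>S. r s) (\<lambda>z. \<Prod>s\<in>S. F s z) y"
  using S F v
proof (induction S rule: finite_induct)
  case empty show ?case by (simp add: van_0)
next
  case (insert s S)
  have "van p (r s + (\<Sum>s\<in>S. r s)) (\<lambda>z. F s z * (\<Prod>s\<in>S. F s z)) y"
    by (rule van_mult[OF V y]) (use insert in \<open>auto intro: Cp_prod[OF V]\<close>)
  thus ?case using insert by simp
qed

lemma van_scale:
  fixes y :: "real^'m::finite"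
  assumes V: "open V" and y: "y \<in> V" and f: "Cp_on p V f" and v: "van p r f y"
  shows "van p r (\<lambda>z. c * f z) y"
proof (rule vanI)
  fix l :: "'m list" assume "length l < r" "length l \<le> p"
  thus "pdl l (\<lambda>z. c * f z) y = 0" using pdl_scale[OF V f, where l=l and x=y and r=c] vanD[OF v] y by simp
qed

lemma Cp_comp:
  fixes \<phi> :: "real^'m::finite \<Rightarrow> real^'n::finite"
  assumes "Cp_map_on p V \<phi>"
  shows "Cp_on p V (\<lambda>z. \<phi> z $ k)"
  using assms unfolding Cp_map_on_def by blast

lemma Cp_mpow_phi:
  fixes \<phi> :: "real^'m::finite \<Rightarrow> real^'n::finite"
  assumes V: "open V" and \<phi>: "Cp_map_on p V \<phi>"
  shows "Cp_on p V (\<lambda>z. mpow (\<phi> z - a) \<alpha>)"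
proof -
  have fac: "Cp_on p V (\<lambda>z. \<phi> z $ k - a $ k)" for k
    by (intro Cp_diff[OF V] Cp_comp[OF \<phi>] Cp_const)
  show ?thesis unfolding mpow_def vector_minus_component
    by (intro Cp_prod[OF V] Cp_power[OF V] fac) auto
qed

lemma van_G:
  fixes \<phi> :: "real^'m::finite \<Rightarrow> real^'n::finite"
  assumes V: "open V" and \<phi>: "Cp_map_on p V \<phi>" and y: "y \<in> V"
  shows "van p (mdeg \<alpha>) (\<lambda>z. mpow (\<phi> z - \<phi> y) \<alpha> / real (mfact \<alpha>)) y"
proof -
  have fac: "Cp_on p V (\<lambda>z. \<phi> z $ k - \<phi> y $ k)" for k
    by (intro Cp_diff[OF V] Cp_comp[OF \<phi>] Cp_const)
  have v1: "van p 1 (\<lambda>z. \<phi> z $ k - \<phi> y $ k) y" for k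
    by (rule vanI) simp
  have vp: "van p (\<alpha> k) (\<lambda>z. (\<phi> z $ k - \<phi> y $ k) ^ \<alpha> k) y" for k
    using van_power[OF V y fac v1, of "\<alpha> k"] by simp
  have "van p (\<Sum>k\<in>UNIV. \<alpha> k) (\<lambda>z. \<Prod>k\<in>UNIV. (\<phi> z $ k - \<phi> y $ k) ^ \<alpha> k) y"
    by (rule van_prod[OF V y, where r=\<alpha>]) (auto intro: Cp_power[OF V fac] vp)
  hence "van p (mdeg \<alpha>) (\<lambda>z. inverse (real (mfact \<alpha>)) * (\<Prod>k\<in>UNIV. (\<phi> z $ k - \<phi> y $ k) ^ \<alpha> k)) y"
    by (intro van_scale[OF V y]) (auto simp: mdeg_def intro: Cp_prod[OF V] Cp_power[OF V fac])
  moreover have "(\<lambda>z. inverse (real (mfact \<alpha>)) * (\<Prod>k\<in>UNIV. (\<phi> z $ k - \<phi> y $ k) ^ \<alpha> k)) =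
                 (\<lambda>z. mpow (\<phi> z - \<phi> y) \<alpha> / real (mfact \<alpha>))"
    by (simp add: mpow_def divide_inverse mult.commute)
  ultimately show ?thesis by simp
qed

lemma mderiv_G_zero:
  fixes \<phi> :: "real^'m::finite \<Rightarrow> real^'n::finite"
  assumes V: "open V" and \<phi>: "Cp_map_on p V \<phi>" and y: "y \<in> V"
    and "mdeg \<beta> < mdeg \<alpha>" "mdeg \<beta> \<le> p"
  shows "mderiv \<beta> (\<lambda>z. mpow (\<phi> z - \<phi> y) \<alpha> / real (mfact \<alpha>)) y = 0"
  unfolding mderiv_mlist by (rule vanD[OF van_G[OF V \<phi> y]]) (use assms in \<open>simp_all add: length_mlist\<close>)

lemma box_near:
  fixes x y z b0 :: "real^'m::finite"
  assumes x: "norm (x - b0) < \<delta>" and y: "norm (y - b0) < \<delta>" and z: "inbox x y z"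
  shows "norm (z - b0) < real CARD('m) * \<delta>" "norm (z - x) \<le> norm (y - x)"
proof -
  have ck: "\<bar>(z - b0)$k\<bar> < \<delta>" for k
  proof -
    have "\<bar>(x - b0)$k\<bar> < \<delta>" using component_le_norm_cart[of "x - b0" k] x by linarith
    moreover have "\<bar>(y - b0)$k\<bar> < \<delta>" using component_le_norm_cart[of "y - b0" k] y by linarith
    moreover have "(x$k \<le> z$k \<and> z$k \<le> y$k) \<or> (y$k \<le> z$k \<and> z$k \<le> x$k)"
      using z unfolding inbox_def by blast
    ultimately show ?thesis by (auto simp: abs_less_iff)
  qed
  have "norm (z - b0) \<le> (\<Sum>k\<in>UNIV. \<bar>(z - b0)$k\<bar>)" by (rule norm_le_l1_cart)
  also have "\<dots> < (\<Sum>k\<in>(UNIV::'m set). \<delta>)"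
  proof (rule sum_strict_mono)
    fix k :: 'm show "\<bar>(z - b0)$k\<bar> < \<delta>" by (rule ck)
  qed auto
  also have "\<dots> = real CARD('m) * \<delta>" by simp
  finally show "norm (z - b0) < real CARD('m) * \<delta>" .
  show "norm (z - x) \<le> norm (y - x)"
  proof (rule norm_le_componentwise_cart)
    fix k
    have "(x$k \<le> z$k \<and> z$k \<le> y$k) \<or> (y$k \<le> z$k \<and> z$k \<le> x$k)"
      using z unfolding inbox_def by blast
    thus "norm ((z - x)$k) \<le> norm ((y - x)$k)" by auto
  qed
qed

lemma cont_near_bound:
  fixes F :: "real^'m::finite \<Rightarrow> real"
  assumes V: "open V" and c: "continuous_on V F" and b0: "b0 \<in> V"
  shows "\<exists>d>0. \<forall>z. norm (z - b0) < d \<longrightarrow> z \<in> V \<and> \<bar>F z\<bar> \<le> \<bar>F b0\<bar> + 1"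
proof -
  obtain d1 where d1: "d1 > 0" "\<And>z. z \<in> V \<Longrightarrow> dist z b0 < d1 \<Longrightarrow> dist (F z) (F b0) < 1"
    using c b0 unfolding continuous_on_iff by (metis zero_less_one)
  obtain r where r: "r > 0" "ball b0 r \<subseteq> V" using V b0 openE by blast
  show ?thesis
  proof (intro exI[of _ "min d1 r"] conjI allI impI)
    show "min d1 r > 0" using d1 r by simp
    fix z assume z: "norm (z - b0) < min d1 r"
    show zV: "z \<in> V" using z r by (auto simp: dist_norm norm_minus_commute)
    have "dist (F z) (F b0) < 1" using d1(2)[OF zV] z by (simp add: dist_norm)
    thus "\<bar>F z\<bar> \<le> \<bar>F b0\<bar> + 1" unfolding dist_real_def by arith
  qed
qed

lemma lipschitz_near:
  fixes \<phi> :: "real^'m::finite \<Rightarrow> real^'n::finite"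
  assumes V: "open V" and \<phi>: "Cp_map_on (Suc p') V \<phi>" and b0: "b0 \<in> V"
  shows "\<exists>L \<delta>. \<delta> > 0 \<and> (\<forall>x y. norm (x - b0) < \<delta> \<longrightarrow> norm (y - b0) < \<delta> \<longrightarrow>
              norm (\<phi> y - \<phi> x) \<le> L * norm (y - x))"
proof -
  let ?F = "\<lambda>k z. \<phi> z $ k"
  have cS: "Cp_on (Suc p') V (?F k)" for k using Cp_comp[OF \<phi>] .
  define B where "B k i = \<bar>partial i (?F k) b0\<bar> + 1" for k i
  have "\<exists>d>0. \<forall>k. \<forall>i. \<forall>z. norm (z - b0) < d \<longrightarrow> z \<in> V \<and> \<bar>partial i (?F k) z\<bar> \<le> B k i"
  proof (rule finite_delta)
    fix k :: 'n
    show "\<exists>d>0. \<forall>i. \<forall>z. norm (z - b0) < d \<longrightarrow> z \<in> V \<and> \<bar>partial i (?F k) z\<bar> \<le> B k i"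
    proof (rule finite_delta)
      fix i :: 'm
      have "continuous_on V (partial i (?F k))" using Cp_cont[OF Cp_Suc_D(3)[OF cS]] .
      from cont_near_bound[OF V this b0]
      show "\<exists>d>0. \<forall>z. norm (z - b0) < d \<longrightarrow> z \<in> V \<and> \<bar>partial i (?F k) z\<bar> \<le> B k i" unfolding B_def .
    qed auto
  qed auto
  then obtain d where d: "d > 0" and dd: "\<And>k i z. norm (z - b0) < d \<Longrightarrow> z \<in> V \<and> \<bar>partial i (?F k) z\<bar> \<le> B k i"
    by blast
  define Bm where "Bm = (\<Sum>k\<in>UNIV. \<Sum>i\<in>UNIV. B k i)"
  have Bpos: "B k i \<ge> 0" for k i unfolding B_def by simp
  have Ble: "B k i \<le> Bm" for k i
  proof -
    have "B k i \<le> (\<Sum>i\<in>UNIV. B k i)" by (rule member_le_sum) (auto simp: Bpos)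
    also have "\<dots> \<le> Bm" unfolding Bm_def by (rule member_le_sum) (auto intro: sum_nonneg Bpos)
    finally show ?thesis .
  qed
  let ?Nm = "real CARD('m)" and ?Nn = "real CARD('n)"
  have Nm: "?Nm \<ge> 1" by (rule card_pos_real)
  define \<delta> where "\<delta> = d / ?Nm"
  have \<delta>: "\<delta> > 0" "?Nm * \<delta> = d" using d Nm unfolding \<delta>_def by auto
  have main: "\<forall>x y. norm (x - b0) < \<delta> \<longrightarrow> norm (y - b0) < \<delta> \<longrightarrow>
              norm (\<phi> y - \<phi> x) \<le> ?Nn * (Bm * ?Nm) * norm (y - x)"
  proof (intro allI impI)
    fix x y assume x: "norm (x - b0) < \<delta>" and y: "norm (y - b0) < \<delta>"
    have comp: "\<bar>\<phi> y $ k - \<phi> x $ k\<bar> \<le> Bm * ?Nm * norm (y - x)" for k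
    proof -
      have "\<bar>?F k y - ?F k x\<bar> \<le> Bm * (\<Sum>l\<in>UNIV. \<bar>y$l - x$l\<bar>)"
      proof (rule axis_mvt_box[where F' = "\<lambda>i z. partial i (?F k) z"])
        fix z i assume z: "inbox x y z"
        have zn: "norm (z - b0) < d" using box_near(1)[OF x y z] \<delta> by simp
        have zV: "z \<in> V" using dd[OF zn] by blast
        show "((\<lambda>t. ?F k (z + t *\<^sub>R axis i 1)) has_real_derivative partial i (?F k) z) (at 0)"
          by (rule partial_deriv[OF Cp_Suc_D(2)[OF cS zV]])
        have "\<bar>partial i (?F k) z\<bar> \<le> B k i" using dd[OF zn, of i k] by blast
        thus "\<bar>partial i (?F k) z\<bar> \<le> Bm" using Ble[of k i] by linarith
      qed
      also have "\<dots> \<le> Bm * (?Nm * norm (y - x))"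
        using sum_abs_le_card_norm[of "y - x"] Bpos
        by (intro mult_left_mono) (auto simp: Bm_def intro!: sum_nonneg)
      finally show ?thesis by (simp add: mult.assoc)
    qed
    have "norm (\<phi> y - \<phi> x) \<le> (\<Sum>k\<in>UNIV. \<bar>(\<phi> y - \<phi> x)$k\<bar>)" by (rule norm_le_l1_cart)
    also have "\<dots> \<le> (\<Sum>k\<in>(UNIV::'n set). Bm * ?Nm * norm (y - x))"
      by (rule sum_mono) (use comp in simp)
    also have "\<dots> = ?Nn * (Bm * ?Nm) * norm (y - x)" by simp
    finally show "norm (\<phi> y - \<phi> x) \<le> ?Nn * (Bm * ?Nm) * norm (y - x)" .
  qed
  show ?thesis using main \<delta>(1) by blast
qed

lemma phi_tendsto:
  fixes \<phi> :: "real^'m::finite \<Rightarrow> real^'n::finite"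
  assumes V: "open V" and \<phi>: "Cp_map_on p V \<phi>" and b0: "b0 \<in> V" and f: "(f \<longlongrightarrow> b0) F"
  shows "((\<lambda>j. \<phi> (f j)) \<longlongrightarrow> \<phi> b0) F"
proof (rule vec_tendstoI)
  fix k
  show "((\<lambda>j. \<phi> (f j) $ k) \<longlongrightarrow> \<phi> b0 $ k) F"
    using cont_tendsto_V[OF V Cp_cont[OF Cp_comp[OF \<phi>]] b0 f] by simp
qed

lemma conv_ev_bound:
  fixes x :: "nat \<Rightarrow> real"
  assumes "x \<longlonglongrightarrow> L"
  shows "\<exists>M. eventually (\<lambda>j. \<bar>x j\<bar> \<le> M) sequentially"
proof -
  have "eventually (\<lambda>j. dist (x j) L < 1) sequentially" using assms by (rule tendstoD) simp
  hence "eventually (\<lambda>j. \<bar>x j\<bar> \<le> \<bar>L\<bar> + 1) sequentially"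
    by eventually_elim (auto simp: dist_real_def)
  thus ?thesis by blast
qed

lemma deriv_G_bound:
  fixes \<phi> :: "real^'m::finite \<Rightarrow> real^'n::finite" and y :: "nat \<Rightarrow> real^'m"
  assumes V: "open V" and \<phi>: "Cp_map_on p V \<phi>" and b0: "b0 \<in> V"
    and yc: "y \<longlonglongrightarrow> b0" and yV: "\<And>j. y j \<in> V" and \<beta>: "mdeg \<beta> \<le> p"
  shows "\<exists>M. eventually (\<lambda>j. \<bar>mderiv \<beta> (\<lambda>z. mpow (\<phi> z - \<phi> (y j)) \<alpha> / real (mfact \<alpha>)) (y j)\<bar> \<le> M) sequentially"
proof -
  define H where "H \<delta> z = inverse (real (mfact \<delta>)) * mpow (\<phi> z) \<delta>" for \<delta> z
  define cf where "cf a \<delta> = mpow (- a) (\<alpha> - \<delta>) / real (mfact (\<alpha> - \<delta>))" for a :: "real^'n" and \<delta>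
  have HC: "Cp_on p V (H \<delta>)" for \<delta>
  proof -
    have "Cp_on p V (\<lambda>z. mpow (\<phi> z - 0) \<delta>)" by (rule Cp_mpow_phi[OF V \<phi>])
    hence "Cp_on p V (\<lambda>z. inverse (real (mfact \<delta>)) * mpow (\<phi> z - 0) \<delta>)" by (rule Cp_scale[OF V])
    thus ?thesis unfolding H_def by simp
  qed
  have expand: "(\<lambda>z. mpow (\<phi> z - a) \<alpha> / real (mfact \<alpha>)) = (\<lambda>z. \<Sum>\<delta>\<in>{\<delta>. \<delta> \<le> \<alpha>}. cf a \<delta> * H \<delta> z)" for a
  proof
    fix z
    have "mpow (\<phi> z - a) \<alpha> / real (mfact \<alpha>) = mpow (\<phi> z + - a) \<alpha> / real (mfact \<alpha>)" by simp
    also have "\<dots> = (\<Sum>\<delta>\<in>{\<delta>. \<delta> \<le> \<alpha>}. cf a \<delta> * H \<delta> z)"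
      unfolding mbinom cf_def H_def by (intro sum.cong refl) (simp add: divide_inverse mult_ac)
    finally show "mpow (\<phi> z - a) \<alpha> / real (mfact \<alpha>) = (\<Sum>\<delta>\<in>{\<delta>. \<delta> \<le> \<alpha>}. cf a \<delta> * H \<delta> z)" .
  qed
  have val: "mderiv \<beta> (\<lambda>z. mpow (\<phi> z - a) \<alpha> / real (mfact \<alpha>)) w = (\<Sum>\<delta>\<in>{\<delta>. \<delta> \<le> \<alpha>}. cf a \<delta> * mderiv \<beta> (H \<delta>) w)"
    if w: "w \<in> V" for a w
  proof -
    have "mderiv \<beta> (\<lambda>z. \<Sum>\<delta>\<in>{\<delta>. \<delta> \<le> \<alpha>}. cf a \<delta> * H \<delta> z) w = (\<Sum>\<delta>\<in>{\<delta>. \<delta> \<le> \<alpha>}. mderiv \<beta> (\<lambda>z. cf a \<delta> * H \<delta> z) w)"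
      by (rule mderiv_sum[OF V finite_le_fun _ \<beta> w]) (intro Cp_scale[OF V] HC)
    also have "\<dots> = (\<Sum>\<delta>\<in>{\<delta>. \<delta> \<le> \<alpha>}. cf a \<delta> * mderiv \<beta> (H \<delta>) w)"
      by (intro sum.cong refl mderiv_scale[OF V HC \<beta> w])
    finally show ?thesis unfolding expand .
  qed
  have phic: "(\<lambda>j. \<phi> (y j)) \<longlonglongrightarrow> \<phi> b0" by (rule phi_tendsto[OF V \<phi> b0 yc])
  have "(\<lambda>j. \<Sum>\<delta>\<in>{\<delta>. \<delta> \<le> \<alpha>}. cf (\<phi> (y j)) \<delta> * mderiv \<beta> (H \<delta>) (y j)) \<longlonglongrightarrow>
        (\<Sum>\<delta>\<in>{\<delta>. \<delta> \<le> \<alpha>}. cf (\<phi> b0) \<delta> * mderiv \<beta> (H \<delta>) b0)"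
    unfolding cf_def
    by (intro tendsto_sum tendsto_mult tendsto_divide mpow_tendsto tendsto_minus phic tendsto_const
          cont_tendsto_V[OF V mderiv_cont[OF HC \<beta>] b0 yc]) (simp add: mfact_pos)
  hence "(\<lambda>j. mderiv \<beta> (\<lambda>z. mpow (\<phi> z - \<phi> (y j)) \<alpha> / real (mfact \<alpha>)) (y j)) \<longlonglongrightarrow>
        (\<Sum>\<delta>\<in>{\<delta>. \<delta> \<le> \<alpha>}. cf (\<phi> b0) \<delta> * mderiv \<beta> (H \<delta>) b0)"
    by (simp add: val[OF yV])
  thus ?thesis by (rule conv_ev_bound)
qed

lemma ev_bound_all:
  fixes F :: "nat \<Rightarrow> real"
  assumes "eventually (\<lambda>j. F j \<le> C0) sequentially"
  shows "\<exists>C. \<forall>j. F j \<le> C"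
proof -
  obtain N where N: "\<And>j. j \<ge> N \<Longrightarrow> F j \<le> C0" using assms unfolding eventually_sequentially by blast
  have "F j \<le> max C0 (\<Sum>j<N. \<bar>F j\<bar>)" for j
  proof (cases "j \<ge> N")
    case True
    hence "F j \<le> C0" by (rule N)
    thus ?thesis by simp
  next
    case False
    hence "\<bar>F j\<bar> \<le> (\<Sum>j<N. \<bar>F j\<bar>)" by (intro member_le_sum) auto
    thus ?thesis by simp
  qed
  thus ?thesis by blast
qed

lemma bound_main:
  fixes \<phi> :: "real^'m::finite \<Rightarrow> real^'n::finite" and b :: "nat \<Rightarrow> nat \<Rightarrow> real^'m"
    and \<eta> :: "nat \<Rightarrow> nat \<Rightarrow> (real^'m \<Rightarrow> real) \<Rightarrow> real"
  assumes V: "open V" and \<phi>: "Cp_map_on p V \<phi>" and b0: "b0 \<in> V"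
    and bV: "\<And>i j. i \<le> k \<Longrightarrow> b i j \<in> V"
    and bconv: "\<And>i. i \<le> k \<Longrightarrow> (\<lambda>j. b i j) \<longlonglongrightarrow> b0"
    and \<eta>d: "\<And>i j. i \<le> k \<Longrightarrow> \<eta> i j \<in> pdual p"
    and bnd: "\<And>i j \<beta>. i \<le> k \<Longrightarrow> mdeg \<beta> \<le> p \<Longrightarrow>
                 norm (b i j - b 0 j) ^ (p - mdeg \<beta>) * \<bar>zcomp (\<eta> i j) (b i j) \<beta>\<bar> \<le> c"
    and i: "i \<le> k" and \<alpha>: "mdeg \<alpha> \<le> p"
  shows "\<exists>C. \<forall>j. norm (\<phi> (b i j) - \<phi> (b 0 j)) ^ (p - mdeg \<alpha>) *
            \<bar>zcomp (pushfwd p \<phi> (b i j) (\<eta> i j)) (\<phi> (b i j)) \<alpha>\<bar> \<le> C"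
proof -
  let ?G = "\<lambda>j z. mpow (\<phi> z - \<phi> (b i j)) \<alpha> / real (mfact \<alpha>)"
  let ?q = "p - mdeg \<alpha>"
  define S where "S = {\<beta>::'m\<Rightarrow>nat. mdeg \<beta> \<le> p \<and> mdeg \<alpha> \<le> mdeg \<beta>}"
  have S: "finite S" "S \<subseteq> {\<beta>. mdeg \<beta> \<le> p}" unfolding S_def by (auto intro: finite_subset[OF _ finite_MI])
  have xi: "zcomp (pushfwd p \<phi> (b i j) (\<eta> i j)) (\<phi> (b i j)) \<alpha> =
       (\<Sum>\<beta>\<in>S. mderiv \<beta> (?G j) (b i j) * zcomp (\<eta> i j) (b i j) \<beta>)" for j
  proof -
    have "zcomp (pushfwd p \<phi> (b i j) (\<eta> i j)) (\<phi> (b i j)) \<alpha> = \<eta> i j (taylor p (b i j) (?G j))"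
      unfolding zcomp_def pushfwd_def pullback_def by (simp add: o_def)
    also have "\<dots> = (\<Sum>\<beta>\<in>{\<beta>. mdeg \<beta> \<le> p}. mderiv \<beta> (?G j) (b i j) * zcomp (\<eta> i j) (b i j) \<beta>)"
      by (rule pdual_taylor[OF \<eta>d[OF i]])
    also have "\<dots> = (\<Sum>\<beta>\<in>S. mderiv \<beta> (?G j) (b i j) * zcomp (\<eta> i j) (b i j) \<beta>)"
    proof (rule sum.mono_neutral_right[OF finite_MI S(2)])
      show "\<forall>\<beta>\<in>{\<beta>. mdeg \<beta> \<le> p} - S. mderiv \<beta> (?G j) (b i j) * zcomp (\<eta> i j) (b i j) \<beta> = 0"
      proof
        fix \<beta> assume "\<beta> \<in> {\<beta>. mdeg \<beta> \<le> p} - S"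
        hence "mdeg \<beta> < mdeg \<alpha>" "mdeg \<beta> \<le> p" unfolding S_def by auto
        thus "mderiv \<beta> (?G j) (b i j) * zcomp (\<eta> i j) (b i j) \<beta> = 0"
          using mderiv_G_zero[OF V \<phi> bV[OF i]] by simp
      qed
    qed
    finally show ?thesis .
  qed
  have "\<forall>\<beta>\<in>S. \<exists>M. eventually (\<lambda>j. \<bar>mderiv \<beta> (?G j) (b i j)\<bar> \<le> M) sequentially"
  proof
    fix \<beta> assume "\<beta> \<in> S"
    hence \<beta>: "mdeg \<beta> \<le> p" unfolding S_def by auto
    show "\<exists>M. eventually (\<lambda>j. \<bar>mderiv \<beta> (?G j) (b i j)\<bar> \<le> M) sequentially"
      by (rule deriv_G_bound[OF V \<phi> b0 bconv[OF i] bV[OF i] \<beta>])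
  qed
  from bchoice[OF this] obtain Mf where Mf: "\<forall>\<beta>\<in>S. eventually (\<lambda>j. \<bar>mderiv \<beta> (?G j) (b i j)\<bar> \<le> Mf \<beta>) sequentially"
    by blast
  have evM: "eventually (\<lambda>j. \<forall>\<beta>\<in>S. \<bar>mderiv \<beta> (?G j) (b i j)\<bar> \<le> Mf \<beta>) sequentially"
    by (rule eventually_ball_finite[OF S(1) Mf])
  have b0j: "(\<lambda>j. b 0 j) \<longlonglongrightarrow> b0" using bconv[of 0] by simp
  have "\<exists>L\<ge>0. eventually (\<lambda>j. norm (\<phi> (b i j) - \<phi> (b 0 j)) ^ ?q \<le> (L * norm (b i j - b 0 j)) ^ ?q) sequentially"
  proof (cases "?q = 0")
    case True thus ?thesis by (intro exI[of _ 0]) simp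
  next
    case False
    then obtain p' where p: "p = Suc p'" by (cases p) auto
    obtain L \<delta> where \<delta>: "\<delta> > 0" and Lip: "\<And>x y. norm (x - b0) < \<delta> \<Longrightarrow> norm (y - b0) < \<delta> \<Longrightarrow>
              norm (\<phi> y - \<phi> x) \<le> L * norm (y - x)"
      using lipschitz_near[OF V \<phi>[unfolded p] b0] by blast
    have ev1: "eventually (\<lambda>j. dist (b i j) b0 < \<delta>) sequentially" using bconv[OF i] \<delta> by (rule tendstoD)
    have ev0: "eventually (\<lambda>j. dist (b 0 j) b0 < \<delta>) sequentially" using b0j \<delta> by (rule tendstoD)
    have "eventually (\<lambda>j. norm (\<phi> (b i j) - \<phi> (b 0 j)) ^ ?q \<le> (\<bar>L\<bar> * norm (b i j - b 0 j)) ^ ?q) sequentially"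
      using ev1 ev0
    proof eventually_elim
      case (elim j)
      have "norm (\<phi> (b i j) - \<phi> (b 0 j)) \<le> L * norm (b i j - b 0 j)"
        by (rule Lip) (use elim in \<open>auto simp: dist_norm\<close>)
      also have "\<dots> \<le> \<bar>L\<bar> * norm (b i j - b 0 j)" by (rule mult_right_mono) auto
      finally show ?case by (intro power_mono) auto
    qed
    thus ?thesis by (intro exI[of _ "\<bar>L\<bar>"]) simp
  qed
  then obtain L where L0: "L \<ge> 0" and evL: "eventually (\<lambda>j. norm (\<phi> (b i j) - \<phi> (b 0 j)) ^ ?q \<le> (L * norm (b i j - b 0 j)) ^ ?q) sequentially"
    by blast
  have evh: "eventually (\<lambda>j. norm (b i j - b 0 j) \<le> 1) sequentially"
  proof -
    have ev1: "eventually (\<lambda>j. dist (b i j) b0 < 1/2) sequentially" using bconv[OF i] by (rule tendstoD) simp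
    have ev0: "eventually (\<lambda>j. dist (b 0 j) b0 < 1/2) sequentially" using b0j by (rule tendstoD) simp
    show ?thesis using ev1 ev0
    proof eventually_elim
      case (elim j)
      have "norm (b i j - b 0 j) \<le> dist (b i j) b0 + dist (b 0 j) b0"
        using dist_triangle[of "b i j" "b 0 j" b0] by (simp add: dist_norm norm_minus_commute)
      thus ?case using elim by linarith
    qed
  qed
  define C0 where "C0 = (\<Sum>\<beta>\<in>S. Mf \<beta> * (L ^ ?q * c))"
  have "eventually (\<lambda>j. norm (\<phi> (b i j) - \<phi> (b 0 j)) ^ ?q *
            \<bar>zcomp (pushfwd p \<phi> (b i j) (\<eta> i j)) (\<phi> (b i j)) \<alpha>\<bar> \<le> C0) sequentially"
    using evM evL evh
  proof eventually_elim
    case (elim j)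
    let ?n = "norm (\<phi> (b i j) - \<phi> (b 0 j)) ^ ?q" and ?h = "norm (b i j - b 0 j)"
    let ?D = "\<lambda>\<beta>. mderiv \<beta> (?G j) (b i j)" and ?z = "\<lambda>\<beta>. zcomp (\<eta> i j) (b i j) \<beta>"
    have key: "?n * \<bar>?z \<beta>\<bar> \<le> L ^ ?q * c" if \<beta>: "\<beta> \<in> S" for \<beta>
    proof -
      have \<beta>p: "mdeg \<beta> \<le> p" "mdeg \<alpha> \<le> mdeg \<beta>" using \<beta> unfolding S_def by auto
      have "?n * \<bar>?z \<beta>\<bar> \<le> (L * ?h) ^ ?q * \<bar>?z \<beta>\<bar>" by (rule mult_right_mono[OF elim(2)]) simp
      also have "\<dots> = L ^ ?q * (?h ^ ?q * \<bar>?z \<beta>\<bar>)" by (simp add: power_mult_distrib)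
      also have "\<dots> \<le> L ^ ?q * (?h ^ (p - mdeg \<beta>) * \<bar>?z \<beta>\<bar>)"
      proof -
        have "?h ^ ?q \<le> ?h ^ (p - mdeg \<beta>)" by (rule power_decreasing) (use \<beta>p elim(3) in auto)
        hence "?h ^ ?q * \<bar>?z \<beta>\<bar> \<le> ?h ^ (p - mdeg \<beta>) * \<bar>?z \<beta>\<bar>" by (rule mult_right_mono) simp
        thus ?thesis by (rule mult_left_mono) (use L0 in simp)
      qed
      also have "\<dots> \<le> L ^ ?q * c" by (rule mult_left_mono[OF bnd[OF i \<beta>p(1)]]) (use L0 in simp)
      finally show ?thesis .
    qed
    have "?n * \<bar>zcomp (pushfwd p \<phi> (b i j) (\<eta> i j)) (\<phi> (b i j)) \<alpha>\<bar> = ?n * \<bar>\<Sum>\<beta>\<in>S. ?D \<beta> * ?z \<beta>\<bar>"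
      unfolding xi ..
    also have "\<dots> \<le> ?n * (\<Sum>\<beta>\<in>S. \<bar>?D \<beta>\<bar> * \<bar>?z \<beta>\<bar>)"
    proof (rule mult_left_mono)
      have "\<bar>\<Sum>\<beta>\<in>S. ?D \<beta> * ?z \<beta>\<bar> \<le> (\<Sum>\<beta>\<in>S. \<bar>?D \<beta> * ?z \<beta>\<bar>)" by (rule sum_abs)
      thus "\<bar>\<Sum>\<beta>\<in>S. ?D \<beta> * ?z \<beta>\<bar> \<le> (\<Sum>\<beta>\<in>S. \<bar>?D \<beta>\<bar> * \<bar>?z \<beta>\<bar>)" by (simp add: abs_mult)
    qed simp
    also have "\<dots> = (\<Sum>\<beta>\<in>S. \<bar>?D \<beta>\<bar> * (?n * \<bar>?z \<beta>\<bar>))"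
      by (simp add: sum_distrib_left mult_ac)
    also have "\<dots> \<le> (\<Sum>\<beta>\<in>S. Mf \<beta> * (L ^ ?q * c))"
    proof (rule sum_mono)
      fix \<beta> assume \<beta>: "\<beta> \<in> S"
      have D: "\<bar>?D \<beta>\<bar> \<le> Mf \<beta>" using elim(1) \<beta> by blast
      show "\<bar>?D \<beta>\<bar> * (?n * \<bar>?z \<beta>\<bar>) \<le> Mf \<beta> * (L ^ ?q * c)"
        by (rule mult_mono[OF D key[OF \<beta>]]) (use D in auto)
    qed
    finally show ?case unfolding C0_def .
  qed
  thus ?thesis by (rule ev_bound_all)
qed

theorem lemma5p1:
  fixes U :: "(real^'n::finite) set" and X :: "(real^'n) set"
    and V :: "(real^'m::finite) set" and Y :: "(real^'m) set"
    and \<phi> :: "real^'m \<Rightarrow> real^'n"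
    and p k :: nat
    and b :: "nat \<Rightarrow> nat \<Rightarrow> real^'m"
    and \<eta> :: "nat \<Rightarrow> nat \<Rightarrow> (real^'m \<Rightarrow> real) \<Rightarrow> real"
    and b0 :: "real^'m" and \<eta>0 :: "(real^'m \<Rightarrow> real) \<Rightarrow> real"
    and c :: real
  assumes "open U" and "open V"
    and "closedin (top_of_set U) X" and "closedin (top_of_set V) Y"
    and "\<phi> ` V \<subseteq> U" and "Cp_map_on p V \<phi>" and "\<phi> ` Y \<subseteq> X"
    and "k \<ge> 1"
    and "\<forall>i\<le>k. \<forall>j. b i j \<in> Y"
    and "\<forall>i\<le>k. \<forall>j. \<eta> i j \<in> pdual p"
    and "b0 \<in> Y" and "\<forall>i\<le>k. (\<lambda>j. b i j) \<longlonglongrightarrow> b0"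
    and "\<eta>0 \<in> pdual p"
    and "dual_tendsto p (\<lambda>j P. \<Sum>i\<le>k. \<eta> i j P) \<eta>0"
    and "\<forall>i\<le>k. \<forall>j. \<forall>\<beta>::'m \<Rightarrow> nat. mdeg \<beta> \<le> p \<longrightarrow>
           norm (b i j - b 0 j) ^ (p - mdeg \<beta>) * \<bar>zcomp (\<eta> i j) (b i j) \<beta>\<bar> \<le> c"
  shows "(\<forall>i\<le>k. (\<lambda>j. \<phi> (b i j)) \<longlonglongrightarrow> \<phi> b0) \<and> \<phi> b0 \<in> X
       \<and> dual_tendsto p (\<lambda>j P. \<Sum>i\<le>k. pushfwd p \<phi> (b i j) (\<eta> i j) P) (pushfwd p \<phi> b0 \<eta>0)
       \<and> (\<exists>c'. \<forall>i\<le>k. \<forall>j. \<forall>\<alpha>::'n \<Rightarrow> nat. mdeg \<alpha> \<le> p \<longrightarrow>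
            norm (\<phi> (b i j) - \<phi> (b 0 j)) ^ (p - mdeg \<alpha>)
              * \<bar>zcomp (pushfwd p \<phi> (b i j) (\<eta> i j)) (\<phi> (b i j)) \<alpha>\<bar> \<le> c')"
proof -
  have V: "open V" by (rule assms(2))
  have \<phi>: "Cp_map_on p V \<phi>" by (rule assms(6))
  have YV: "Y \<subseteq> V" using closedin_subset[OF assms(4)] by simp
  have b0V: "b0 \<in> V" using assms(11) YV by blast
  have bV: "b i j \<in> V" if "i \<le> k" for i j using assms(9) that YV by blast
  have bconv: "(\<lambda>j. b i j) \<longlonglongrightarrow> b0" if "i \<le> k" for i using assms(12) that by blast
  have \<eta>d: "\<eta> i j \<in> pdual p" if "i \<le> k" for i j using assms(10) that by blast
  have bnd: "norm (b i j - b 0 j) ^ (p - mdeg \<beta>) * \<bar>zcomp (\<eta> i j) (b i j) \<beta>\<bar> \<le> c"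
    if "i \<le> k" "mdeg \<beta> \<le> p" for i j \<beta> using assms(15) that by blast
  have P1: "\<forall>i\<le>k. (\<lambda>j. \<phi> (b i j)) \<longlonglongrightarrow> \<phi> b0"
    using phi_tendsto[OF V \<phi> b0V bconv] by blast
  have P2: "\<phi> b0 \<in> X" using assms(7,11) by blast
  have P3: "dual_tendsto p (\<lambda>j P. \<Sum>i\<le>k. pushfwd p \<phi> (b i j) (\<eta> i j) P) (pushfwd p \<phi> b0 \<eta>0)"
    unfolding dual_tendsto_def
  proof
    fix P :: "real^'n \<Rightarrow> real" assume "P \<in> polys p"
    then obtain a where a: "P = (\<lambda>x. \<Sum>\<gamma>\<in>{\<gamma>. mdeg \<gamma> \<le> p}. a \<gamma> * mpow x \<gamma>)" unfolding polys_def by blast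
    have "P \<circ> \<phi> = (\<lambda>z. \<Sum>\<gamma>\<in>{\<gamma>. mdeg \<gamma> \<le> p}. a \<gamma> * mpow (\<phi> z - 0) \<gamma>)" by (simp add: a o_def)
    moreover have "Cp_on p V (\<lambda>z. \<Sum>\<gamma>\<in>{\<gamma>. mdeg \<gamma> \<le> p}. a \<gamma> * mpow (\<phi> z - 0) \<gamma>)"
      by (intro Cp_sum[OF V finite_MI] Cp_scale[OF V] Cp_mpow_phi[OF V \<phi>])
    ultimately have gC: "Cp_on p V (P \<circ> \<phi>)" by simp
    have "(\<lambda>j. \<Sum>i\<le>k. \<eta> i j (taylor p (b i j) (P \<circ> \<phi>))) \<longlonglongrightarrow> \<eta>0 (taylor p b0 (P \<circ> \<phi>))"
      by (rule conv_main[OF V gC b0V bV bconv \<eta>d assms(13) assms(14) bnd])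
    thus "(\<lambda>j. (\<lambda>j P. \<Sum>i\<le>k. pushfwd p \<phi> (b i j) (\<eta> i j) P) j P) \<longlonglongrightarrow> pushfwd p \<phi> b0 \<eta>0 P"
      by (simp add: pushfwd_def pullback_def)
  qed
  let ?F = "\<lambda>i \<alpha> j. norm (\<phi> (b i j) - \<phi> (b 0 j)) ^ (p - mdeg \<alpha>)
              * \<bar>zcomp (pushfwd p \<phi> (b i j) (\<eta> i j)) (\<phi> (b i j)) \<alpha>\<bar>"
  let ?I = "{..k} \<times> {\<alpha>::'n\<Rightarrow>nat. mdeg \<alpha> \<le> p}"
  have "\<forall>ia\<in>?I. \<exists>C. \<forall>j. ?F (fst ia) (snd ia) j \<le> C"
  proof
    fix ia assume ia: "ia \<in> ?I"
    show "\<exists>C. \<forall>j. ?F (fst ia) (snd ia) j \<le> C"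
      by (rule bound_main[where V=V and p=p and \<phi>=\<phi> and k=k and b=b and \<eta>=\<eta> and c=c,
            OF V \<phi> b0V bV bconv \<eta>d bnd]) (use ia in auto)
  qed
  from bchoice[OF this] obtain Cf where Cf: "\<forall>ia\<in>?I. \<forall>j. ?F (fst ia) (snd ia) j \<le> Cf ia" by blast
  have finI: "finite ?I" using finite_MI by blast
  have P4: "\<forall>i\<le>k. \<forall>j. \<forall>\<alpha>::'n \<Rightarrow> nat. mdeg \<alpha> \<le> p \<longrightarrow> ?F i \<alpha> j \<le> (\<Sum>ia\<in>?I. \<bar>Cf ia\<bar>)"
  proof (intro allI impI)
    fix i j and \<alpha> :: "'n \<Rightarrow> nat" assume i: "i \<le> k" and \<alpha>: "mdeg \<alpha> \<le> p"
    have mem: "(i, \<alpha>) \<in> ?I" using i \<alpha> by simp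
    have "?F i \<alpha> j \<le> Cf (i, \<alpha>)" using Cf mem by fastforce
    also have "\<dots> \<le> \<bar>Cf (i, \<alpha>)\<bar>" by simp
    also have "\<dots> \<le> (\<Sum>ia\<in>?I. \<bar>Cf ia\<bar>)" by (rule member_le_sum[OF mem _ finI]) simp
    finally show "?F i \<alpha> j \<le> (\<Sum>ia\<in>?I. \<bar>Cf ia\<bar>)" .
  qed
  show ?thesis using P1 P2 P3 P4 by blast
qed

end
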